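(* Let $N\simeq\mathbb{Z}^2$ be a lattice and $N_{\mathbb{R}}=N\otimes_{\mathbb{Z}}\mathbb{R}$. For any two reflexive polygons $\nabla,\nabla'$ in $N_{\mathbb{R}}$ there is a finite sequence $\nabla=\nabla_0,\nabla_1,\dots,\nabla_k=\nabla'$ of reflexive polygons in $N_{\mathbb{R}}$ such that for each $i$ either $\nabla_{i}\subset\nabla_{i+1}$ or $\nabla_{i}\supset\nabla_{i+1}$. (No identification modulo unimodular equivalence, i.e. modulo $GL(N)$, is made.) The same statement holds with "reflexive polygons" replaced by "terminal polygons" throughout.
   Context: Let $M=\mathrm{Hom}(N,\mathbb{Z})$. A lattice polygon $\nabla\subset N_{\mathbb{R}}$ is reflexive if it contains the origin as an interior point and its polar dual $\nabla^*=\{u\in M_{\mathbb{R}} : \langle u,v\rangle\ge -1 \text{ for all } v\in\nabla\}$ is again a lattice polygon (vertices in $M$). A lattice polygon $\nabla\subset N_{\mathbb{R}}$ is terminal if it contains the origin as an interior point and $\nabla\cap N$ consists exactly of the vertices of $\nabla$ and the origin. *)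

theory Defs
  imports "HOL-Analysis.Analysis"
begin

text \<open>We identify N with the standard lattice Z^2 in N_R = R^2 (modelled as real \<times> real),
and M = Hom(N,Z) with Z^2 via the standard pairing (the inner product).\<close>

definition lattice_pt :: "real \<times> real \<Rightarrow> bool" where
  "lattice_pt v \<longleftrightarrow> fst v \<in> \<int> \<and> snd v \<in> \<int>"

definition lattice_polygon :: "(real \<times> real) set \<Rightarrow> bool" where
  "lattice_polygon P \<longleftrightarrow>
     (\<exists>S. finite S \<and> (\<forall>v\<in>S. lattice_pt v) \<and> P = convex hull S) \<and> interior P \<noteq> {}"

definition polar_dual :: "(real \<times> real) set \<Rightarrow> (real \<times> real) set" where
  "polar_dual P = {u. \<forall>v\<in>P. inner u v \<ge> -1}"

definition reflexive_polygon :: "(real \<times> real) set \<Rightarrow> bool" where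
  "reflexive_polygon P \<longleftrightarrow>
     lattice_polygon P \<and> 0 \<in> interior P \<and> lattice_polygon (polar_dual P)"

definition terminal_polygon :: "(real \<times> real) set \<Rightarrow> bool" where
  "terminal_polygon P \<longleftrightarrow>
     lattice_polygon P \<and> 0 \<in> interior P \<and>
     {v \<in> P. lattice_pt v} = {v. v extreme_point_of P} \<union> {0}"

end

theory Submission
  imports Defs
begin

definition R :: "int \<times> int \<Rightarrow> real \<times> real" where
  "R z = (of_int (fst z), of_int (snd z))"

lemma R_Pair: "R (a,b) = (of_int a, of_int b)"
  by (simp add: R_def)

lemma R_add[simp]: "R (x + y) = R x + R y" and R_minus[simp]: "R (- x) = - R x"
  and R_diff[simp]: "R (x - y) = R x - R y" and R_zero[simp]: "R 0 = 0"
  by (auto simp: R_def zero_prod_def)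

lemma R_eq_iff[simp]: "R x = R y \<longleftrightarrow> x = y"
  by (auto simp: R_def prod_eq_iff)

lemma R_eq_0_iff[simp]: "R x = 0 \<longleftrightarrow> x = 0"
  using R_eq_iff[of x 0] by simp

lemma lattice_pt_iff: "lattice_pt v \<longleftrightarrow> v \<in> range R"
proof
  assume "lattice_pt v"
  then obtain i j where "fst v = of_int i" "snd v = of_int j"
    unfolding lattice_pt_def by (auto elim!: Ints_cases)
  then have "v = R (i,j)" by (simp add: prod_eq_iff R_Pair)
  then show "v \<in> range R" by blast
qed (auto simp: lattice_pt_def R_def)

lemma lattice_R[simp]: "lattice_pt (R z)"
  by (simp add: lattice_pt_iff)

definition idet :: "int \<times> int \<Rightarrow> int \<times> int \<Rightarrow> int" where
  "idet a b = fst a * snd b - snd a * fst b"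

definition uni :: "int \<times> int \<Rightarrow> int \<times> int \<Rightarrow> bool" where
  "uni a b \<longleftrightarrow> idet a b = 1 \<or> idet a b = -1"

definition lm :: "int \<times> int \<Rightarrow> int \<times> int \<Rightarrow> real \<times> real \<Rightarrow> real \<times> real" where
  "lm a b v = (fst v * of_int (fst a) + snd v * of_int (fst b),
               fst v * of_int (snd a) + snd v * of_int (snd b))"

lemma lm_linear: "linear (lm a b)"
  by (rule linearI) (auto simp: lm_def algebra_simps)

lemma lm_R: "lm a b (R z) = R (fst z * fst a + snd z * fst b, fst z * snd a + snd z * snd b)"
  by (simp add: lm_def R_def)

lemma lm_inv:
  assumes "uni a b"
  shows "\<exists>a' b'. uni a' b' \<and> (\<forall>x. lm a' b' (lm a b x) = x) \<and> (\<forall>x. lm a b (lm a' b' x) = x)"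
proof -
  define d where "d = idet a b"
  have dd: "d * d = 1" using assms by (auto simp: uni_def d_def)
  have ddr: "(of_int d :: real) * of_int d = 1"
    by (metis dd of_int_1 of_int_mult)
  define a' where "a' = (d * snd b, - d * snd a)"
  define b' where "b' = (- d * fst b, d * fst a)"
  have "idet a' b' = d * d * d"
    by (simp add: a'_def b'_def idet_def d_def algebra_simps)
  then have u: "uni a' b'" using assms dd by (auto simp: uni_def d_def)
  have dr: "(of_int d :: real) = of_int (fst a) * of_int (snd b) - of_int (snd a) * of_int (fst b)"
    by (simp add: d_def idet_def)
  have e1: "lm a' b' (lm a b x) = x" for x
  proof -
    have "lm a' b' (lm a b x) = (of_int d * of_int d * fst x, of_int d * of_int d * snd x)"
      unfolding lm_def a'_def b'_def by (simp add: dr algebra_simps)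
    then show ?thesis by (simp add: ddr)
  qed
  have e2: "lm a b (lm a' b' x) = x" for x
  proof -
    have "lm a b (lm a' b' x) = (of_int d * of_int d * fst x, of_int d * of_int d * snd x)"
      unfolding lm_def a'_def b'_def by (simp add: dr algebra_simps)
    then show ?thesis by (simp add: ddr)
  qed
  show ?thesis using u e1 e2 by blast
qed

lemma lm_bij: "uni a b \<Longrightarrow> bij (lm a b)"
  by (metis bij_betw_byWitness[of UNIV _ _ UNIV] lm_inv image_subset_iff UNIV_I surjI
      bijI' )


lemma lm_transpose: "inner u (lm a b v) = inner (lm (fst a, fst b) (snd a, snd b) u) v"
  by (cases u; cases v) (simp add: lm_def inner_real_def algebra_simps)

lemma uni_transpose: "uni a b \<Longrightarrow> uni (fst a, fst b) (snd a, snd b)"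
  by (simp add: uni_def idet_def algebra_simps)

lemma lm_lattice: "lattice_pt v \<Longrightarrow> lattice_pt (lm a b v)"
  unfolding lattice_pt_iff by (auto simp: lm_R)

lemma lm_interior: "uni a b \<Longrightarrow> interior (lm a b ` P) = lm a b ` interior P"
  by (rule interior_bijective_linear_image[OF lm_linear lm_bij])

lemma lattice_polygon_lm:
  assumes "uni a b" "lattice_polygon P"
  shows "lattice_polygon (lm a b ` P)"
proof -
  obtain S where S: "finite S" "\<forall>v\<in>S. lattice_pt v" "P = convex hull S"
    and i: "interior P \<noteq> {}" using assms(2) unfolding lattice_polygon_def by blast
  have "lm a b ` P = convex hull (lm a b ` S)"
    using convex_hull_linear_image[OF lm_linear] S by simp
  moreover have "finite (lm a b ` S)" using S by simp
  moreover have "\<forall>v\<in>lm a b ` S. lattice_pt v" using S lm_lattice by blast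
  moreover have "interior (lm a b ` P) \<noteq> {}" using i lm_interior[OF assms(1)] by simp
  ultimately show ?thesis unfolding lattice_polygon_def by blast
qed

lemma polar_dual_lm:
  assumes "uni a b"
  shows "\<exists>a' b'. uni a' b' \<and> polar_dual (lm a b ` P) = lm a' b' ` polar_dual P"
proof -
  define t1 where "t1 = (fst a, fst b)"
  define t2 where "t2 = (snd a, snd b)"
  have ut: "uni t1 t2" using uni_transpose[OF assms] by (simp add: t1_def t2_def)
  obtain a' b' where u': "uni a' b'" and i1: "\<And>x. lm a' b' (lm t1 t2 x) = x"
    and i2: "\<And>x. lm t1 t2 (lm a' b' x) = x"
    using lm_inv[OF ut] by blast
  have eq: "polar_dual (lm a b ` P) = {u. lm t1 t2 u \<in> polar_dual P}"
    by (auto simp: polar_dual_def lm_transpose t1_def t2_def)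
  have "{u. lm t1 t2 u \<in> polar_dual P} = lm a' b' ` polar_dual P"
  proof (intro equalityI subsetI)
    fix u assume "u \<in> {u. lm t1 t2 u \<in> polar_dual P}"
    then show "u \<in> lm a' b' ` polar_dual P" using i1[of u] by (metis image_eqI mem_Collect_eq)
  next
    fix u assume "u \<in> lm a' b' ` polar_dual P"
    then show "u \<in> {u. lm t1 t2 u \<in> polar_dual P}" using i2 by auto
  qed
  then show ?thesis using eq u' by blast
qed

lemma reflexive_lm:
  assumes "uni a b" "reflexive_polygon P"
  shows "reflexive_polygon (lm a b ` P)"
proof -
  have "lm a b 0 = 0" by (simp add: lm_def zero_prod_def)
  then have "0 \<in> interior (lm a b ` P)"
    using assms lm_interior[OF assms(1)] unfolding reflexive_polygon_def by (metis image_eqI)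
  moreover obtain a' b' where "uni a' b'" "polar_dual (lm a b ` P) = lm a' b' ` polar_dual P"
    using polar_dual_lm[OF assms(1)] by blast
  ultimately show ?thesis using assms lattice_polygon_lm unfolding reflexive_polygon_def by metis
qed

lemma extreme_lm:
  assumes "uni a b"
  shows "lm a b y extreme_point_of (lm a b ` S) \<longleftrightarrow> y extreme_point_of S"
proof -
  have inj: "inj (lm a b)" using lm_bij[OF assms] bij_is_inj by blast
  have os: "open_segment (lm a b p) (lm a b q) = lm a b ` open_segment p q" for p q
    by (rule open_segment_linear_image[OF lm_linear inj])
  show ?thesis unfolding extreme_point_of_def
    by (simp add: os inj_image_mem_iff[OF inj])
qed

lemma extreme_lm_image:
  assumes "uni a b"
  shows "{v. v extreme_point_of (lm a b ` P)} = lm a b ` {v. v extreme_point_of P}"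
proof (intro equalityI subsetI)
  fix x assume "x \<in> {v. v extreme_point_of (lm a b ` P)}"
  then have x: "x extreme_point_of (lm a b ` P)" by simp
  then have "x \<in> lm a b ` P" by (simp add: extreme_point_of_def)
  then obtain y where y: "x = lm a b y" by blast
  have "y extreme_point_of P" using x unfolding y extreme_lm[OF assms] .
  then show "x \<in> lm a b ` {v. v extreme_point_of P}" using y by blast
next
  fix x assume "x \<in> lm a b ` {v. v extreme_point_of P}"
  then obtain y where y: "x = lm a b y" "y extreme_point_of P" by blast
  have "lm a b y extreme_point_of (lm a b ` P)" using y(2) unfolding extreme_lm[OF assms] .
  then show "x \<in> {v. v extreme_point_of (lm a b ` P)}" using y by simp
qed

lemma lattice_lm_image:
  assumes "uni a b"
  shows "{v \<in> lm a b ` P. lattice_pt v} = lm a b ` {v \<in> P. lattice_pt v}"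
proof -
  obtain a' b' where i1: "\<And>x. lm a' b' (lm a b x) = x"
    using lm_inv[OF assms(1)] by blast
  show ?thesis
  proof (intro equalityI subsetI)
    fix v assume "v \<in> {v \<in> lm a b ` P. lattice_pt v}"
    then obtain x where x: "x \<in> P" "v = lm a b x" "lattice_pt (lm a b x)" by blast
    then have "lattice_pt x" using lm_lattice[of "lm a b x" a' b'] i1 by simp
    then show "v \<in> lm a b ` {v \<in> P. lattice_pt v}" using x by blast
  next
    fix v assume "v \<in> lm a b ` {v \<in> P. lattice_pt v}"
    then obtain x where "v = lm a b x" "x \<in> P" "lattice_pt x" by blast
    then show "v \<in> {v \<in> lm a b ` P. lattice_pt v}" using lm_lattice by blast
  qed
qed

lemma terminal_lm:
  assumes "uni a b" "terminal_polygon P"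
  shows "terminal_polygon (lm a b ` P)"
proof -
  have z: "lm a b 0 = 0" by (simp add: lm_def zero_prod_def)
  have P: "lattice_polygon P" "0 \<in> interior P"
    "{v \<in> P. lattice_pt v} = {v. v extreme_point_of P} \<union> {0}"
    using assms(2) unfolding terminal_polygon_def by auto
  have "lm a b 0 \<in> lm a b ` interior P" using P(2) by (rule imageI)
  then have 1: "0 \<in> interior (lm a b ` P)"
    unfolding lm_interior[OF assms(1)] z .
  have 2: "lattice_polygon (lm a b ` P)"
    using lattice_polygon_lm[OF assms(1) P(1)] .
  have 3: "{v \<in> lm a b ` P. lattice_pt v} = {v. v extreme_point_of (lm a b ` P)} \<union> {0}"
    unfolding lattice_lm_image[OF assms(1)] extreme_lm_image[OF assms(1)] P(3)
      image_Un using z by simp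
  show ?thesis unfolding terminal_polygon_def using 1 2 3 by blast
qed


lemma convex_polar_dual: "convex (polar_dual X)"
  unfolding convex_def polar_dual_def
proof (intro ballI allI impI, simp only: mem_Collect_eq, intro ballI)
  fix x y :: "real \<times> real" and u v :: real and w
  assume x: "\<forall>w\<in>X. - 1 \<le> inner x w" and y: "\<forall>w\<in>X. - 1 \<le> inner y w"
    and uv: "0 \<le> u" "0 \<le> v" "u + v = 1" and w: "w \<in> X"
  have "u * (-1) \<le> u * inner x w" using x w uv by (intro mult_left_mono) auto
  moreover have "v * (-1) \<le> v * inner y w" using y w uv by (intro mult_left_mono) auto
  ultimately show "- 1 \<le> inner (u *\<^sub>R x + v *\<^sub>R y) w"
    using uv by (simp add: inner_add_left)
qed

lemma polar_dual_hull: "polar_dual (convex hull V) = polar_dual V"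
proof (intro equalityI subsetI)
  fix u assume "u \<in> polar_dual (convex hull V)"
  then show "u \<in> polar_dual V" using hull_subset[of V convex] unfolding polar_dual_def by blast
next
  fix u assume u: "u \<in> polar_dual V"
  have "V \<subseteq> {v. inner u v \<ge> -1}" using u unfolding polar_dual_def by blast
  then have "convex hull V \<subseteq> {v. inner u v \<ge> -1}"
    by (intro hull_minimal) (auto simp: convex_halfspace_ge)
  then show "u \<in> polar_dual (convex hull V)" unfolding polar_dual_def by blast
qed

lemma zero_interior_pd:
  assumes "finite V"
  shows "0 \<in> interior (polar_dual V)"
proof (rule interiorI)
  show "open (\<Inter>v\<in>V. {u. inner v u > -1})"
    using assms by (intro open_INT) (auto simp: open_halfspace_gt)
  show "0 \<in> (\<Inter>v\<in>V. {u. inner v u > -1})" by simp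
  show "(\<Inter>v\<in>V. {u. inner v u > -1}) \<subseteq> polar_dual V"
  proof
    fix u assume "u \<in> (\<Inter>v\<in>V. {u. inner v u > -1})"
    then have "\<forall>v\<in>V. inner u v > -1" by (auto simp only: inner_commute)
    then show "u \<in> polar_dual V" unfolding polar_dual_def by (auto intro: less_imp_le)
  qed
qed

lemma reflexive_template:
  assumes "finite V" "finite W" "\<forall>v\<in>V. lattice_pt v" "\<forall>v\<in>W. lattice_pt v"
    "convex hull V = polar_dual W" "convex hull W = polar_dual V"
  shows "reflexive_polygon (convex hull V)"
proof -
  have i1: "0 \<in> interior (convex hull V)" using zero_interior_pd[OF assms(2)] assms(5) by simp
  have i2: "0 \<in> interior (convex hull W)" using zero_interior_pd[OF assms(1)] assms(6) by simp
  have "lattice_polygon (convex hull V)" unfolding lattice_polygon_def using assms i1 by blast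
  moreover have "lattice_polygon (polar_dual (convex hull V))"
    unfolding polar_dual_hull assms(6)[symmetric] lattice_polygon_def using assms i2 by blast
  ultimately show ?thesis unfolding reflexive_polygon_def using i1 by blast
qed

lemma hull_sub_pd:
  assumes "V \<subseteq> polar_dual W" shows "convex hull V \<subseteq> polar_dual W"
  using assms convex_polar_dual by (intro hull_minimal) auto

lemma in_tri:
  assumes "0 \<le> a" "0 \<le> b" "0 \<le> c" "a + b + c = 1" "u = a *\<^sub>R p + b *\<^sub>R q + c *\<^sub>R r"
    "{p, q, r} \<subseteq> V"
  shows "u \<in> convex hull V"
proof -
  have "u \<in> convex hull {p,q,r}" unfolding convex_hull_3 using assms by blast
  then show ?thesis using hull_mono[OF assms(6)] by blast
qed

lemma pd_mem: "(x, y) \<in> polar_dual W \<longleftrightarrow> (\<forall>(a,b)\<in>W. -1 \<le> x * a + y * b)"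
  by (auto simp: polar_dual_def inner_real_def)

lemma ints_simps: "(1::real) \<in> \<int>" "(0::real) \<in> \<int>" "(-1::real) \<in> \<int>" "(2::real) \<in> \<int>"
  "(-2::real) \<in> \<int>" "(3::real) \<in> \<int>"
  by (auto intro: Ints_minus)

definition VT :: "(real \<times> real) set" where "VT = {(1,0),(0,1),(-1,-1)}"
definition WT :: "(real \<times> real) set" where "WT = {(-1,-1),(2,-1),(-1,2)}"

lemma VT_WT: "convex hull VT = polar_dual WT"
proof
  show "convex hull VT \<subseteq> polar_dual WT"
    by (intro hull_sub_pd) (auto simp: VT_def WT_def pd_mem)
  show "polar_dual WT \<subseteq> convex hull VT"
  proof
    fix u assume "u \<in> polar_dual WT"
    moreover obtain x y where u: "u = (x, y)" by (cases u)
    ultimately have h: "-x-y \<ge> -1" "2*x-y \<ge> -1" "-x+2*y \<ge> -1"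
      by (auto simp: WT_def pd_mem)
    show "u \<in> convex hull VT"
      by (rule in_tri[where a="x + (1-x-y)/3" and b="y+(1-x-y)/3" and c="(1-x-y)/3"
            and p="(1,0)" and q="(0,1)" and r="(-1,-1)"])
        (use h in \<open>auto simp: u VT_def field_simps\<close>)
  qed
qed

lemma WT_VT: "convex hull WT = polar_dual VT"
proof
  show "convex hull WT \<subseteq> polar_dual VT"
    by (intro hull_sub_pd) (auto simp: VT_def WT_def pd_mem)
  show "polar_dual VT \<subseteq> convex hull WT"
  proof
    fix u assume "u \<in> polar_dual VT"
    moreover obtain x y where u: "u = (x, y)" by (cases u)
    ultimately have h: "x \<ge> -1" "y \<ge> -1" "-x-y \<ge> -1"
      by (auto simp: VT_def pd_mem)
    show "u \<in> convex hull WT"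
      by (rule in_tri[where a="(1-x-y)/3" and b="(x+1)/3" and c="(y+1)/3"
            and p="(-1,-1)" and q="(2,-1)" and r="(-1,2)"])
        (use h in \<open>auto simp: u WT_def field_simps\<close>)
  qed
qed

lemma refl_T0: "reflexive_polygon (convex hull VT)"
  by (rule reflexive_template[OF _ _ _ _ VT_WT WT_VT]) (auto simp: VT_def WT_def lattice_pt_def ints_simps)

lemma refl_Tstar0: "reflexive_polygon (convex hull WT)"
  by (rule reflexive_template[OF _ _ _ _ WT_VT VT_WT]) (auto simp: VT_def WT_def lattice_pt_def ints_simps)


definition VS :: "(real \<times> real) set" where "VS = {(1,0),(0,1),(-1,0),(0,-1)}"
definition WS :: "(real \<times> real) set" where "WS = {(1,1),(-1,1),(-1,-1),(1,-1)}"
definition VU :: "(real \<times> real) set" where "VU = {(1,0),(0,1),(-1,-2)}"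
definition WU :: "(real \<times> real) set" where "WU = {(-1,-1),(3,-1),(-1,1)}"
definition VH :: "(real \<times> real) set" where "VH = {(1,0),(1,1),(0,1),(-1,0),(-1,-1),(0,-1)}"
definition WH :: "(real \<times> real) set" where "WH = {(1,0),(0,1),(-1,1),(-1,0),(0,-1),(1,-1)}"

lemma VS_WS: "convex hull VS = polar_dual WS"
proof
  show "convex hull VS \<subseteq> polar_dual WS"
    by (intro hull_sub_pd) (auto simp: VS_def WS_def pd_mem)
  show "polar_dual WS \<subseteq> convex hull VS"
  proof
    fix u assume "u \<in> polar_dual WS"
    moreover obtain x y where u: "u = (x, y)" by (cases u)
    ultimately have h: "x+y \<ge> -1" "-x+y \<ge> -1" "-x-y \<ge> -1" "x-y \<ge> -1"
      by (auto simp: WS_def pd_mem)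
    show "u \<in> convex hull VS"
    proof (cases "x \<ge> 0")
      case True
      show ?thesis
        by (rule in_tri[where a="x" and b="(1-x+y)/2" and c="(1-x-y)/2"
            and p="(1,0)" and q="(0,1)" and r="(0,-1)"])
          (use h True in \<open>auto simp: u VS_def field_simps\<close>)
    next
      case False
      show ?thesis
        by (rule in_tri[where a="-x" and b="(1+x+y)/2" and c="(1+x-y)/2"
            and p="(-1,0)" and q="(0,1)" and r="(0,-1)"])
          (use h False in \<open>auto simp: u VS_def field_simps\<close>)
    qed
  qed
qed

lemma WS_VS: "convex hull WS = polar_dual VS"
proof
  show "convex hull WS \<subseteq> polar_dual VS"
    by (intro hull_sub_pd) (auto simp: VS_def WS_def pd_mem)
  show "polar_dual VS \<subseteq> convex hull WS"
  proof
    fix u assume "u \<in> polar_dual VS"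
    moreover obtain x y where u: "u = (x, y)" by (cases u)
    ultimately have h: "x \<ge> -1" "y \<ge> -1" "-x \<ge> -1" "-y \<ge> -1"
      by (auto simp: VS_def pd_mem)
    show "u \<in> convex hull WS"
    proof (cases "y \<ge> x")
      case True
      show ?thesis
        by (rule in_tri[where a="(x+1)/2" and b="(y-x)/2" and c="(1-y)/2"
            and p="(1,1)" and q="(-1,1)" and r="(-1,-1)"])
          (use h True in \<open>auto simp: u WS_def field_simps\<close>)
    next
      case False
      show ?thesis
        by (rule in_tri[where a="(y+1)/2" and b="(x-y)/2" and c="(1-x)/2"
            and p="(1,1)" and q="(1,-1)" and r="(-1,-1)"])
          (use h False in \<open>auto simp: u WS_def field_simps\<close>)
    qed
  qed
qed

lemma VU_WU: "convex hull VU = polar_dual WU"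
proof
  show "convex hull VU \<subseteq> polar_dual WU"
    by (intro hull_sub_pd) (auto simp: VU_def WU_def pd_mem)
  show "polar_dual WU \<subseteq> convex hull VU"
  proof
    fix u assume "u \<in> polar_dual WU"
    moreover obtain x y where u: "u = (x, y)" by (cases u)
    ultimately have h: "-x-y \<ge> -1" "3*x-y \<ge> -1" "-x+y \<ge> -1"
      by (auto simp: WU_def pd_mem)
    show "u \<in> convex hull VU"
      by (rule in_tri[where a="(1+3*x-y)/4" and b="(1-x+y)/2" and c="(1-x-y)/4"
            and p="(1,0)" and q="(0,1)" and r="(-1,-2)"])
        (use h in \<open>auto simp: u VU_def field_simps\<close>)
  qed
qed

lemma WU_VU: "convex hull WU = polar_dual VU"
proof
  show "convex hull WU \<subseteq> polar_dual VU"
    by (intro hull_sub_pd) (auto simp: VU_def WU_def pd_mem)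
  show "polar_dual VU \<subseteq> convex hull WU"
  proof
    fix u assume "u \<in> polar_dual VU"
    moreover obtain x y where u: "u = (x, y)" by (cases u)
    ultimately have h: "x \<ge> -1" "y \<ge> -1" "-x-2*y \<ge> -1"
      by (auto simp: VU_def pd_mem)
    show "u \<in> convex hull WU"
      by (rule in_tri[where a="(1-x-2*y)/4" and b="(x+1)/4" and c="(y+1)/2"
            and p="(-1,-1)" and q="(3,-1)" and r="(-1,1)"])
        (use h in \<open>auto simp: u WU_def field_simps\<close>)
  qed
qed

lemma VH_WH: "convex hull VH = polar_dual WH"
proof
  show "convex hull VH \<subseteq> polar_dual WH"
    by (intro hull_sub_pd) (auto simp: VH_def WH_def pd_mem)
  show "polar_dual WH \<subseteq> convex hull VH"
  proof
    fix u assume "u \<in> polar_dual WH"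
    moreover obtain x y where u: "u = (x, y)" by (cases u)
    ultimately have h: "x \<ge> -1" "y \<ge> -1" "-x+y \<ge> -1" "-x \<ge> -1" "-y \<ge> -1" "x-y \<ge> -1"
      by (auto simp: WH_def pd_mem)
    consider "x + y \<ge> 1" | "x + y \<le> 1" "y \<ge> 0" | "y \<le> 0" "x - 2*y \<le> 1" | "x - 2*y \<ge> 1"
      by linarith
    then show "u \<in> convex hull VH"
    proof cases
      case 1
      show ?thesis
        by (rule in_tri[where a="1-y" and b="x+y-1" and c="1-x"
            and p="(1,0)" and q="(1,1)" and r="(0,1)"])
          (use h 1 in \<open>auto simp: u VH_def field_simps\<close>)
    next
      case 2
      show ?thesis
        by (rule in_tri[where a="(1-y+x)/2" and b="y" and c="(1-y-x)/2"
            and p="(1,0)" and q="(0,1)" and r="(-1,0)"])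
          (use h 2 in \<open>auto simp: u VH_def field_simps\<close>)
    next
      case 3
      show ?thesis
        by (rule in_tri[where a="(1+x)/2" and b="(1-x+2*y)/2" and c="-y"
            and p="(1,0)" and q="(-1,0)" and r="(-1,-1)"])
          (use h 3 in \<open>auto simp: u VH_def field_simps\<close>)
    next
      case 4
      show ?thesis
        by (rule in_tri[where a="1+y" and b="1+y-x" and c="x-1-2*y"
            and p="(1,0)" and q="(-1,-1)" and r="(0,-1)"])
          (use h 4 in \<open>auto simp: u VH_def field_simps\<close>)
    qed
  qed
qed

lemma WH_VH: "convex hull WH = polar_dual VH"
proof
  show "convex hull WH \<subseteq> polar_dual VH"
    by (intro hull_sub_pd) (auto simp: VH_def WH_def pd_mem)
  show "polar_dual VH \<subseteq> convex hull WH"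
  proof
    fix u assume "u \<in> polar_dual VH"
    moreover obtain x y where u: "u = (x, y)" by (cases u)
    ultimately have h: "x \<ge> -1" "x+y \<ge> -1" "y \<ge> -1" "-x \<ge> -1" "-x-y \<ge> -1" "-y \<ge> -1"
      by (auto simp: VH_def pd_mem)
    consider "x + 2*y \<ge> 1" | "x + 2*y \<le> 1" "y \<ge> 0" | "y \<le> 0" "x - y \<le> 1" | "x - y \<ge> 1"
      by linarith
    then show "u \<in> convex hull WH"
    proof cases
      case 1
      show ?thesis
        by (rule in_tri[where a="1-y" and b="2*y+x-1" and c="1-y-x"
            and p="(1,0)" and q="(0,1)" and r="(-1,1)"])
          (use h 1 in \<open>auto simp: u WH_def field_simps\<close>)
    next
      case 2
      show ?thesis
        by (rule in_tri[where a="(1+x)/2" and b="y" and c="(1-x-2*y)/2"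
            and p="(1,0)" and q="(-1,1)" and r="(-1,0)"])
          (use h 2 in \<open>auto simp: u WH_def field_simps\<close>)
    next
      case 3
      show ?thesis
        by (rule in_tri[where a="(1+y+x)/2" and b="(1+y-x)/2" and c="-y"
            and p="(1,0)" and q="(-1,0)" and r="(0,-1)"])
          (use h 3 in \<open>auto simp: u WH_def field_simps\<close>)
    next
      case 4
      show ?thesis
        by (rule in_tri[where a="1+y" and b="1-x" and c="x-1-y"
            and p="(1,0)" and q="(0,-1)" and r="(1,-1)"])
          (use h 4 in \<open>auto simp: u WH_def field_simps\<close>)
    qed
  qed
qed

lemma refl_S0: "reflexive_polygon (convex hull VS)"
  by (rule reflexive_template[OF _ _ _ _ VS_WS WS_VS]) (auto simp: VS_def WS_def lattice_pt_def ints_simps)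
lemma refl_U0: "reflexive_polygon (convex hull VU)"
  by (rule reflexive_template[OF _ _ _ _ VU_WU WU_VU]) (auto simp: VU_def WU_def lattice_pt_def ints_simps)
lemma refl_H0: "reflexive_polygon (convex hull VH)"
  by (rule reflexive_template[OF _ _ _ _ VH_WH WH_VH]) (auto simp: VH_def WH_def lattice_pt_def ints_simps)


lemma extreme_by_sep:
  assumes "finite V" "v \<in> V" "\<forall>w\<in>V - {v}. inner c w \<le> k" "inner c v > k"
  shows "v extreme_point_of convex hull V"
proof -
  have "convex hull (V - {v}) \<subseteq> {x. inner c x \<le> k}"
    using assms(3) by (intro hull_minimal) (auto simp: convex_halfspace_le)
  then have "v \<notin> convex hull (V - {v})" using assms(4) by auto
  then have "v extreme_point_of convex hull (insert v (V - {v}))"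
    using assms(1) by (intro extreme_point_of_convex_hull_insert) auto
  then show ?thesis using assms(2) by (simp add: insert_absorb)
qed

lemma terminal_template:
  assumes "finite V" "finite W" "\<forall>v\<in>V. lattice_pt v" "\<forall>v\<in>W. lattice_pt v"
    "convex hull V = polar_dual W" "convex hull W = polar_dual V"
    "\<forall>v\<in>V. v extreme_point_of convex hull V"
    "\<forall>v\<in>convex hull V. lattice_pt v \<longrightarrow> v \<in> V \<or> v = 0"
  shows "terminal_polygon (convex hull V)"
proof -
  have r: "reflexive_polygon (convex hull V)" by (rule reflexive_template[OF assms(1-6)])
  then have l: "lattice_polygon (convex hull V)" and i: "0 \<in> interior (convex hull V)"
    unfolding reflexive_polygon_def by auto
  have e: "{v. v extreme_point_of convex hull V} = V"
    using assms(7) extreme_point_of_convex_hull by blast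
  have z: "0 \<in> convex hull V" using i interior_subset by blast
  have "{v \<in> convex hull V. lattice_pt v} = V \<union> {0}"
  proof (intro equalityI subsetI)
    fix v assume "v \<in> {v \<in> convex hull V. lattice_pt v}"
    then show "v \<in> V \<union> {0}" using assms(8) by blast
  next
    fix v assume "v \<in> V \<union> {0}"
    then show "v \<in> {v \<in> convex hull V. lattice_pt v}"
    proof
      assume "v \<in> V" then show ?thesis using assms(3) hull_subset[of V convex] by blast
    next
      assume "v \<in> {0}" then show ?thesis using z by (simp add: lattice_pt_def zero_prod_def)
    qed
  qed
  then show ?thesis unfolding terminal_polygon_def e using l i by blast
qed

lemma lattice_ij: "lattice_pt v \<Longrightarrow> \<exists>i j. v = (of_int i, of_int j)"
  unfolding lattice_pt_iff by (auto simp: R_Pair R_def)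

lemma int_cases3: "-1 \<le> (i::int) \<Longrightarrow> i \<le> 1 \<Longrightarrow> i = -1 \<or> i = 0 \<or> i = 1"
  by auto

lemma term_T0: "terminal_polygon (convex hull VT)"
proof (rule terminal_template[OF _ _ _ _ VT_WT WT_VT])
  show "\<forall>v\<in>VT. v extreme_point_of convex hull VT"
  proof
    fix v assume v: "v \<in> VT"
    show "v extreme_point_of convex hull VT"
      by (rule extreme_by_sep[where c=v and k=0]) (use v in \<open>auto simp: VT_def zero_prod_def\<close>)
  qed
  show "\<forall>v\<in>convex hull VT. lattice_pt v \<longrightarrow> v \<in> VT \<or> v = 0"
  proof (intro ballI impI)
    fix v assume v: "v \<in> convex hull VT" "lattice_pt v"
    obtain i j where ij: "v = (of_int i, of_int j)" using lattice_ij[OF v(2)] by blast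
    have h: "-of_int i - of_int j \<ge> (-1::real)" "2 * of_int i - of_int j \<ge> (-1::real)"
      "- of_int i + 2 * of_int j \<ge> (-1::real)"
      using v(1) unfolding VT_WT ij by (auto simp: WT_def pd_mem)
    have "-1 \<le> real_of_int i" using h by argo
    moreover have "real_of_int i \<le> 1" using h by argo
    moreover have "-1 \<le> real_of_int j" using h by argo
    moreover have "real_of_int j \<le> 1" using h by argo
    ultimately have "-1 \<le> i" "i \<le> 1" "-1 \<le> j" "j \<le> 1" by simp_all
    then show "v \<in> VT \<or> v = 0" using h unfolding ij
      by (auto dest!: int_cases3 simp: VT_def zero_prod_def)
  qed
qed (auto simp: VT_def WT_def lattice_pt_def ints_simps)

lemma term_S0: "terminal_polygon (convex hull VS)"
proof (rule terminal_template[OF _ _ _ _ VS_WS WS_VS])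
  show "\<forall>v\<in>VS. v extreme_point_of convex hull VS"
  proof
    fix v assume v: "v \<in> VS"
    show "v extreme_point_of convex hull VS"
      by (rule extreme_by_sep[where c=v and k=0]) (use v in \<open>auto simp: VS_def zero_prod_def\<close>)
  qed
  show "\<forall>v\<in>convex hull VS. lattice_pt v \<longrightarrow> v \<in> VS \<or> v = 0"
  proof (intro ballI impI)
    fix v assume v: "v \<in> convex hull VS" "lattice_pt v"
    obtain i j where ij: "v = (of_int i, of_int j)" using lattice_ij[OF v(2)] by blast
    have h: "of_int i + of_int j \<ge> (-1::real)" "- of_int i + of_int j \<ge> (-1::real)"
      "- of_int i - of_int j \<ge> (-1::real)" "of_int i - of_int j \<ge> (-1::real)"
      using v(1) unfolding VS_WS ij by (auto simp: WS_def pd_mem)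
    have "-1 \<le> real_of_int i" using h by argo
    moreover have "real_of_int i \<le> 1" using h by argo
    moreover have "-1 \<le> real_of_int j" using h by argo
    moreover have "real_of_int j \<le> 1" using h by argo
    ultimately have "-1 \<le> i" "i \<le> 1" "-1 \<le> j" "j \<le> 1" by simp_all
    then show "v \<in> VS \<or> v = 0" using h unfolding ij
      by (auto dest!: int_cases3 simp: VS_def zero_prod_def)
  qed
qed (auto simp: VS_def WS_def lattice_pt_def ints_simps)

lemma term_H0: "terminal_polygon (convex hull VH)"
proof (rule terminal_template[OF _ _ _ _ VH_WH WH_VH])
  show "\<forall>v\<in>VH. v extreme_point_of convex hull VH"
  proof
    fix v assume v: "v \<in> VH"
    have "v = (1,0) \<or> v = (1,1) \<or> v = (0,1) \<or> v = (-1,0) \<or> v = (-1,-1) \<or> v = (0,-1)"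
      using v by (simp add: VH_def)
    then show "v extreme_point_of convex hull VH"
    proof (elim disjE)
      assume "v = (1,0)" then show ?thesis
        by (intro extreme_by_sep[where c="(2,-1)" and k=1]) (auto simp: VH_def)
    next
      assume "v = (1,1)" then show ?thesis
        by (intro extreme_by_sep[where c="(1,1)" and k=1]) (auto simp: VH_def)
    next
      assume "v = (0,1)" then show ?thesis
        by (intro extreme_by_sep[where c="(-1,2)" and k=1]) (auto simp: VH_def)
    next
      assume "v = (-1,0)" then show ?thesis
        by (intro extreme_by_sep[where c="(-2,1)" and k=1]) (auto simp: VH_def)
    next
      assume "v = (-1,-1)" then show ?thesis
        by (intro extreme_by_sep[where c="(-1,-1)" and k=1]) (auto simp: VH_def)
    next
      assume "v = (0,-1)" then show ?thesis
        by (intro extreme_by_sep[where c="(1,-2)" and k=1]) (auto simp: VH_def)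
    qed
  qed
  show "\<forall>v\<in>convex hull VH. lattice_pt v \<longrightarrow> v \<in> VH \<or> v = 0"
  proof (intro ballI impI)
    fix v assume v: "v \<in> convex hull VH" "lattice_pt v"
    obtain i j where ij: "v = (of_int i, of_int j)" using lattice_ij[OF v(2)] by blast
    have h: "of_int i \<ge> (-1::real)" "of_int j \<ge> (-1::real)" "- of_int i + of_int j \<ge> (-1::real)"
      "- of_int i \<ge> (-1::real)" "- of_int j \<ge> (-1::real)" "of_int i - of_int j \<ge> (-1::real)"
      using v(1) unfolding VH_WH ij by (auto simp: WH_def pd_mem)
    have "-1 \<le> real_of_int i" using h by argo
    moreover have "real_of_int i \<le> 1" using h by argo
    moreover have "-1 \<le> real_of_int j" using h by argo
    moreover have "real_of_int j \<le> 1" using h by argo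
    ultimately have "-1 \<le> i" "i \<le> 1" "-1 \<le> j" "j \<le> 1" by simp_all
    then show "v \<in> VH \<or> v = 0" using h unfolding ij
      by (auto dest!: int_cases3 simp: VH_def zero_prod_def)
  qed
qed (auto simp: VH_def WH_def lattice_pt_def ints_simps)


definition conn :: "((real \<times> real) set \<Rightarrow> bool) \<Rightarrow> (real \<times> real) set \<Rightarrow> (real \<times> real) set \<Rightarrow> bool" where
  "conn G X Y \<longleftrightarrow> (\<exists>(k::nat) (Q::nat \<Rightarrow> (real \<times> real) set).
               Q 0 = X \<and> Q k = Y \<and> (\<forall>i\<le>k. G (Q i)) \<and>
               (\<forall>i<k. Q i \<subseteq> Q (Suc i) \<or> Q (Suc i) \<subseteq> Q i))"

lemma conn_refl: "G X \<Longrightarrow> conn G X X"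
  unfolding conn_def by (rule exI[of _ 0], rule exI[of _ "\<lambda>_. X"]) auto

lemma conn_sub: "G X \<Longrightarrow> G Y \<Longrightarrow> X \<subseteq> Y \<Longrightarrow> conn G X Y"
  unfolding conn_def
  apply (rule exI[of _ 1], rule exI[of _ "\<lambda>i. if i = 0 then X else Y"])
  using le_Suc_eq by auto

lemma conn_sym: assumes "conn G X Y" shows "conn G Y X"
proof -
  obtain k Q where Q: "Q 0 = X" "Q k = Y" "\<forall>i\<le>k. G (Q i)"
    "\<forall>i<k. Q i \<subseteq> Q (Suc i) \<or> Q (Suc i) \<subseteq> Q i"
    using assms unfolding conn_def by blast
  define Q' where "Q' i = Q (k - i)" for i
  have "Q' 0 = Y" "Q' k = X" using Q by (auto simp: Q'_def)
  moreover have "\<forall>i\<le>k. G (Q' i)" using Q(3) by (auto simp: Q'_def)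
  moreover have "\<forall>i<k. Q' i \<subseteq> Q' (Suc i) \<or> Q' (Suc i) \<subseteq> Q' i"
  proof (intro allI impI)
    fix i assume i: "i < k"
    then have "k - i = Suc (k - Suc i)" "k - Suc i < k" by auto
    then show "Q' i \<subseteq> Q' (Suc i) \<or> Q' (Suc i) \<subseteq> Q' i"
      using Q(4) unfolding Q'_def by metis
  qed
  ultimately show ?thesis unfolding conn_def by blast
qed

lemma conn_trans: assumes "conn G X Y" "conn G Y Z" shows "conn G X Z"
proof -
  obtain k1 Q1 where Q1: "Q1 0 = X" "Q1 k1 = Y" "\<forall>i\<le>k1. G (Q1 i)"
    "\<forall>i<k1. Q1 i \<subseteq> Q1 (Suc i) \<or> Q1 (Suc i) \<subseteq> Q1 i"
    using assms(1) unfolding conn_def by blast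
  obtain k2 Q2 where Q2: "Q2 0 = Y" "Q2 k2 = Z" "\<forall>i\<le>k2. G (Q2 i)"
    "\<forall>i<k2. Q2 i \<subseteq> Q2 (Suc i) \<or> Q2 (Suc i) \<subseteq> Q2 i"
    using assms(2) unfolding conn_def by blast
  define Q where "Q i = (if i \<le> k1 then Q1 i else Q2 (i - k1))" for i
  have "Q 0 = X" "Q (k1 + k2) = Z" using Q1 Q2 by (auto simp: Q_def)
  moreover have "\<forall>i\<le>k1+k2. G (Q i)" using Q1(3) Q2(3) by (auto simp: Q_def)
  moreover have "\<forall>i<k1+k2. Q i \<subseteq> Q (Suc i) \<or> Q (Suc i) \<subseteq> Q i"
  proof (intro allI impI)
    fix i assume i: "i < k1 + k2"
    show "Q i \<subseteq> Q (Suc i) \<or> Q (Suc i) \<subseteq> Q i"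
    proof (cases "i < k1")
      case True
      then show ?thesis using Q1(4) by (auto simp: Q_def)
    next
      case False
      then have "Q i = Q2 (i - k1)" "Q (Suc i) = Q2 (Suc (i - k1))" "i - k1 < k2"
        using i Q1(2) Q2(1) by (auto simp: Q_def Suc_diff_le)
      then show ?thesis using Q2(4) by metis
    qed
  qed
  ultimately show ?thesis unfolding conn_def by blast
qed

definition Tp :: "int \<times> int \<Rightarrow> int \<times> int \<Rightarrow> (real \<times> real) set" where
  "Tp a b = convex hull (R ` {a, b, -a-b})"
definition Sp :: "int \<times> int \<Rightarrow> int \<times> int \<Rightarrow> (real \<times> real) set" where
  "Sp a b = convex hull (R ` {a, b, -a, -b})"
definition Up :: "int \<times> int \<Rightarrow> int \<times> int \<Rightarrow> (real \<times> real) set" where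
  "Up a b = convex hull (R ` {a, b, -a-b-b})"
definition Hp :: "int \<times> int \<Rightarrow> int \<times> int \<Rightarrow> (real \<times> real) set" where
  "Hp a b = convex hull (R ` {a, a+b, b, -a, -a-b, -b})"
definition Tsp :: "int \<times> int \<Rightarrow> int \<times> int \<Rightarrow> (real \<times> real) set" where
  "Tsp a b = convex hull (R ` {-a-b, a+a-b, -a+b+b})"

lemma lm_hull: "lm a b ` (convex hull V) = convex hull (lm a b ` V)"
  by (rule convex_hull_linear_image[OF lm_linear])

lemma Tp_lm: "Tp a b = lm a b ` (convex hull VT)"
  unfolding lm_hull Tp_def VT_def by (simp add: lm_def R_def)
lemma Sp_lm: "Sp a b = lm a b ` (convex hull VS)"
  unfolding lm_hull Sp_def VS_def by (simp add: lm_def R_def)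
lemma Up_lm: "Up a b = lm a b ` (convex hull VU)"
  unfolding lm_hull Up_def VU_def by (simp add: lm_def R_def algebra_simps)
lemma Hp_lm: "Hp a b = lm a b ` (convex hull VH)"
  unfolding lm_hull Hp_def VH_def by (simp add: lm_def R_def)
lemma Tsp_lm: "Tsp a b = lm a b ` (convex hull WT)"
  unfolding lm_hull Tsp_def WT_def by (simp add: lm_def R_def)


lemma refl_fams: assumes "uni a b"
  shows "reflexive_polygon (Tp a b)" "reflexive_polygon (Sp a b)" "reflexive_polygon (Up a b)"
    "reflexive_polygon (Hp a b)" "reflexive_polygon (Tsp a b)"
  unfolding Tp_lm Sp_lm Up_lm Hp_lm Tsp_lm
  by (rule reflexive_lm[OF assms]; (rule refl_T0 | rule refl_S0 | rule refl_U0 | rule refl_H0 | rule refl_Tstar0))+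

lemma term_fams: assumes "uni a b"
  shows "terminal_polygon (Tp a b)" "terminal_polygon (Sp a b)" "terminal_polygon (Hp a b)"
  unfolding Tp_lm Sp_lm Hp_lm
  by (rule terminal_lm[OF assms]; (rule term_T0 | rule term_S0 | rule term_H0))+

definition sm :: "int \<Rightarrow> int \<times> int \<Rightarrow> int \<times> int" where
  "sm k a = (k * fst a, k * snd a)"

lemma uni_swap: "uni a b \<Longrightarrow> uni b a"
  by (auto simp: uni_def idet_def algebra_simps)
lemma uni_neg1: "uni a b \<Longrightarrow> uni (-a) b"
  by (auto simp: uni_def idet_def algebra_simps)
lemma uni_sm: "uni a b \<Longrightarrow> uni a (b + sm c a)"
  by (auto simp: uni_def idet_def sm_def algebra_simps)

lemma Sp_swap: "Sp a b = Sp b a"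
  unfolding Sp_def by (simp add: insert_commute)
lemma Sp_neg1: "Sp (-a) b = Sp a b"
  unfolding Sp_def by (simp add: insert_commute)
lemma Sp_neg2: "Sp a (-b) = Sp a b"
  unfolding Sp_def by (simp add: insert_commute)

lemma Sp_Hp: "Sp a b \<subseteq> Hp a b"
  unfolding Sp_def Hp_def by (rule hull_mono) auto
lemma Sp_Hp2: "Sp a (b + a) \<subseteq> Hp a b"
  unfolding Sp_def Hp_def by (rule hull_mono) (auto simp: algebra_simps)
lemma Tp_Hp: "Tp a b \<subseteq> Hp a b"
  unfolding Tp_def Hp_def by (rule hull_mono) auto

lemma shear1:
  assumes G: "\<forall>a b. uni a b \<longrightarrow> G (Sp a b) \<and> G (Hp a b)" and u: "uni a b"
  shows "conn G (Sp a b) (Sp a (b + a))"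
proof -
  have u2: "uni a (b + a)" using uni_sm[OF u, of 1] by (simp add: sm_def)
  have g: "G (Sp a b)" "G (Hp a b)" "G (Sp a (b + a))" using G u u2 by blast+
  have "conn G (Sp a b) (Hp a b)" by (rule conn_sub[OF g(1) g(2) Sp_Hp])
  moreover have "conn G (Sp a (b + a)) (Hp a b)" by (rule conn_sub[OF g(3) g(2) Sp_Hp2])
  ultimately show ?thesis using conn_sym conn_trans by blast
qed

lemma shear_nat:
  assumes G: "\<forall>a b. uni a b \<longrightarrow> G (Sp a b) \<and> G (Hp a b)" and u: "uni a b"
  shows "conn G (Sp a b) (Sp a (b + sm (int k) a))"
proof (induction k)
  case 0
  have "b + sm (int 0) a = b" by (simp add: sm_def prod_eq_iff)
  moreover have "G (Sp a b)" using G u by blast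
  ultimately show ?case using conn_refl by metis
next
  case (Suc k)
  have "b + sm (int (Suc k)) a = (b + sm (int k) a) + a" by (simp add: sm_def prod_eq_iff algebra_simps)
  moreover have "conn G (Sp a (b + sm (int k) a)) (Sp a ((b + sm (int k) a) + a))"
    using shear1[OF G uni_sm[OF u]] by blast
  ultimately show ?case using Suc conn_trans by metis
qed

lemma shear_int:
  assumes G: "\<forall>a b. uni a b \<longrightarrow> G (Sp a b) \<and> G (Hp a b)" and u: "uni a b"
  shows "conn G (Sp a b) (Sp a (b + sm c a))"
proof (cases "c \<ge> 0")
  case True
  then show ?thesis using shear_nat[OF G u, of "nat c"] by simp
next
  case False
  define b' where "b' = b + sm c a"
  have u': "uni a b'" using uni_sm[OF u] by (simp add: b'_def)
  have "b = b' + sm (int (nat (-c))) a" using False by (simp add: b'_def sm_def prod_eq_iff)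
  then have "conn G (Sp a b') (Sp a b)" using shear_nat[OF G u', of "nat (-c)"] by simp
  then show ?thesis using conn_sym by (simp add: b'_def)
qed

lemma euclid_base:
  assumes G: "\<forall>a b. uni a b \<longrightarrow> G (Sp a b) \<and> G (Hp a b)" and u: "uni a b" and a0: "fst a = 0"
  shows "conn G (Sp a b) (Sp (1,0) (0,1))"
proof -
  have h: "snd a * fst b = 1 \<or> snd a * fst b = -1" using u a0 by (auto simp: uni_def idet_def)
  then have sa: "snd a = 1 \<or> snd a = -1" and fb: "fst b = 1 \<or> fst b = -1"
    using zmult_eq_1_iff[of "snd a" "fst b"] pos_zmult_eq_1_iff_lemma by (auto simp: zmult_eq_neg1_iff)
  obtain a' where a': "a' = (0,1)" "Sp a b = Sp a' b"
  proof (cases "snd a = 1")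
    case True
    then have "a = (0,1)" using a0 by (simp add: prod_eq_iff)
    then show ?thesis using that by blast
  next
    case False
    then have "-a = (0,1)" using a0 sa by (simp add: prod_eq_iff)
    then show ?thesis using that Sp_neg1[of a b] by metis
  qed
  obtain b' where b': "fst b' = 1" "Sp a' b = Sp a' b'"
  proof (cases "fst b = 1")
    case True
    then show ?thesis using that by blast
  next
    case False
    then have "fst (-b) = 1" using fb by simp
    then show ?thesis using that Sp_neg2[of a' b] by metis
  qed
  have u1: "uni a' (1,0)" using a' by (simp add: uni_def idet_def)
  have "b' = (1,0) + sm (snd b') a'" using a' b' by (simp add: sm_def prod_eq_iff)
  then have "conn G (Sp a' (1,0)) (Sp a' b')" using shear_int[OF G u1, of "snd b'"] by simp
  moreover have "Sp a' (1,0) = Sp (1,0) (0,1)" using a' Sp_swap by simp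
  ultimately show ?thesis using a' b' conn_sym by simp
qed

lemma reduce_abs:
  fixes x y :: int
  assumes "x \<noteq> 0" "\<bar>x\<bar> \<le> \<bar>y\<bar>"
  shows "\<exists>c. \<bar>y + c * x\<bar> < \<bar>y\<bar>"
proof (cases "(x > 0) = (y > 0)")
  case True
  then have "\<bar>y + (-1) * x\<bar> < \<bar>y\<bar>" using assms by (auto simp: abs_if)
  then show ?thesis by blast
next
  case False
  then have "\<bar>y + 1 * x\<bar> < \<bar>y\<bar>" using assms by (auto simp: abs_if)
  then show ?thesis by blast
qed

lemma euclid:
  assumes G: "\<forall>a b. uni a b \<longrightarrow> G (Sp a b) \<and> G (Hp a b)"
  shows "uni a b \<Longrightarrow> conn G (Sp a b) (Sp (1,0) (0,1))"
proof (induction "nat (\<bar>fst a\<bar> + \<bar>fst b\<bar>)" arbitrary: a b rule: less_induct)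
  case less
  show ?case
  proof (cases "fst a = 0")
    case True
    then show ?thesis using euclid_base[OF G less.prems] by blast
  next
    case a0: False
    show ?thesis
    proof (cases "fst b = 0")
      case True
      then show ?thesis using euclid_base[OF G uni_swap[OF less.prems]] Sp_swap[of a b] by simp
    next
      case b0: False
      show ?thesis
      proof (cases "\<bar>fst b\<bar> \<le> \<bar>fst a\<bar>")
        case True
        obtain c where c: "\<bar>fst a + c * fst b\<bar> < \<bar>fst a\<bar>" using reduce_abs[OF b0 True] by blast
        define a' where "a' = a + sm c b"
        have u1: "uni b a'" using uni_sm[OF uni_swap[OF less.prems]] by (simp add: a'_def)
        have c1: "conn G (Sp b a) (Sp b a')" using shear_int[OF G uni_swap[OF less.prems]]
          by (simp add: a'_def)
        have "nat (\<bar>fst a'\<bar> + \<bar>fst b\<bar>) < nat (\<bar>fst a\<bar> + \<bar>fst b\<bar>)"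
          using c by (simp add: a'_def sm_def)
        then have c2: "conn G (Sp a' b) (Sp (1,0) (0,1))" using less.hyps uni_swap[OF u1] by blast
        show ?thesis using c1 c2 Sp_swap[of a b] Sp_swap[of a' b] conn_trans by metis
      next
        case False
        then have F: "\<bar>fst a\<bar> \<le> \<bar>fst b\<bar>" by simp
        obtain c where c: "\<bar>fst b + c * fst a\<bar> < \<bar>fst b\<bar>" using reduce_abs[OF a0 F] by blast
        define b' where "b' = b + sm c a"
        have u1: "uni a b'" using uni_sm[OF less.prems] by (simp add: b'_def)
        have c1: "conn G (Sp a b) (Sp a b')" using shear_int[OF G less.prems]
          by (simp add: b'_def)
        have "nat (\<bar>fst a\<bar> + \<bar>fst b'\<bar>) < nat (\<bar>fst a\<bar> + \<bar>fst b\<bar>)"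
          using c by (simp add: b'_def sm_def)
        then have c2: "conn G (Sp a b') (Sp (1,0) (0,1))" using less.hyps u1 by blast
        show ?thesis using c1 c2 conn_trans by metis
      qed
    qed
  qed
qed


lemma inner_R: "inner (R x) (R y) = of_int (fst x * fst y + snd x * snd y)"
  by (simp add: R_def inner_real_def)

definition condC :: "(real \<times> real) set \<Rightarrow> bool" where
  "condC K \<longleftrightarrow> (\<forall>z t. z \<noteq> 0 \<longrightarrow> t > 1 \<longrightarrow> t *\<^sub>R R z \<notin> K)"

lemma C_refl:
  assumes "reflexive_polygon P"
  shows "condC P"
  unfolding condC_def
proof (intro allI impI notI)
  fix z t assume z: "z \<noteq> 0" and t: "(1::real) < t" and tz: "t *\<^sub>R R z \<in> P"
  obtain D where D: "finite D" "\<forall>v\<in>D. lattice_pt v" "polar_dual P = convex hull D"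
    using assms unfolding reflexive_polygon_def lattice_polygon_def by blast
  obtain S where S: "finite S" "P = convex hull S"
    using assms unfolding reflexive_polygon_def lattice_polygon_def by blast
  have "D \<subseteq> {u. inner (R z) u \<ge> 0}"
  proof
    fix d assume d: "d \<in> D"
    obtain d' where d': "d = R d'" using D(2) d lattice_pt_iff by blast
    have "d \<in> polar_dual P" using d D(3) hull_subset[of D convex] by blast
    then have "-1 \<le> inner d (t *\<^sub>R R z)" using tz unfolding polar_dual_def by blast
    then have "-1 \<le> t * of_int (fst d' * fst z + snd d' * snd z)" by (simp add: d' inner_R)
    then have "fst d' * fst z + snd d' * snd z \<ge> 0"
    proof -
      obtain m where m: "m = fst d' * fst z + snd d' * snd z" by blast
      assume h: "-1 \<le> t * of_int (fst d' * fst z + snd d' * snd z)"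
      then have h: "-1 \<le> t * of_int m" using m by simp
      have "m \<ge> 0"
      proof (rule ccontr)
        assume "\<not> m \<ge> 0"
        then have "m \<le> -1" by simp
        then have "real_of_int m \<le> -1" by simp
        then have "t * of_int m \<le> t * (-1)"
          using t by (intro mult_left_mono) auto
        then show False using h t by simp
      qed
      then show ?thesis using m by simp
    qed
    then have "0 \<le> fst z * fst d' + snd z * snd d'" by (simp add: mult.commute)
    then have "0 \<le> inner (R z) (R d')" unfolding inner_R by (rule of_int_nonneg)
    then show "d \<in> {u. inner (R z) u \<ge> 0}" by (simp add: d')
  qed
  then have hD: "convex hull D \<subseteq> {u. inner (R z) u \<ge> 0}"
    by (intro hull_minimal) (auto simp: convex_halfspace_ge)
  have "bounded P" using S finite_imp_compact_convex_hull compact_imp_bounded by blast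
  then obtain B where B: "B > 0" "\<forall>x\<in>P. norm x \<le> B" unfolding bounded_pos by blast
  have nz: "norm (R z) > 0" using z by simp
  define del where "del = 1 / (B * norm (R z))"
  have del: "del > 0" using B nz by (simp add: del_def)
  define u where "u = - del *\<^sub>R R z"
  have "u \<in> polar_dual P" unfolding polar_dual_def
  proof (intro CollectI ballI)
    fix v assume v: "v \<in> P"
    have "inner (R z) v \<le> norm (R z) * norm v" by (rule norm_cauchy_schwarz)
    also have "\<dots> \<le> norm (R z) * B" using B v by (intro mult_left_mono) auto
    finally have "del * inner (R z) v \<le> del * (norm (R z) * B)"
      using del by (intro mult_left_mono) auto
    also have "\<dots> = 1" using B nz by (simp add: del_def)
    finally show "-1 \<le> inner u v" by (simp add: u_def)
  qed
  then have "inner (R z) u \<ge> 0" using hD D(3) by auto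
  moreover have "inner (R z) u = - del * (norm (R z))^2"
    by (simp add: u_def power2_norm_eq_inner)
  moreover have "del * (norm (R z))^2 > 0" using del nz by simp
  ultimately show False by linarith
qed

lemma C_term:
  assumes "terminal_polygon P"
  shows "condC P"
  unfolding condC_def
proof (intro allI impI notI)
  fix z t assume z: "z \<noteq> 0" and t: "(1::real) < t" and tz: "t *\<^sub>R R z \<in> P"
  obtain S where S: "P = convex hull S"
    using assms unfolding terminal_polygon_def lattice_polygon_def by blast
  have cP: "convex P" using S by simp
  have P0: "0 \<in> P" using assms interior_subset unfolding terminal_polygon_def by blast
  have eq: "R z = (1 - 1/t) *\<^sub>R 0 + (1/t) *\<^sub>R (t *\<^sub>R R z)" using t by simp
  have "(1 - 1/t) *\<^sub>R 0 + (1/t) *\<^sub>R (t *\<^sub>R R z) \<in> P" using t P0 tz cP by (intro convexD) auto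
  then have "R z \<in> P" using eq by simp
  then have "R z \<in> {v \<in> P. lattice_pt v}" by simp
  then have "R z extreme_point_of P" using assms z unfolding terminal_polygon_def by auto
  moreover have "R z \<in> open_segment 0 (t *\<^sub>R R z)"
  proof -
    have "0 \<noteq> t *\<^sub>R R z" using z t by simp
    moreover have "R z = (1 - 1/t) *\<^sub>R 0 + (1/t) *\<^sub>R (t *\<^sub>R R z)" by (rule eq)
    ultimately show ?thesis unfolding in_segment using t by (intro conjI exI[of _ "1/t"]) auto
  qed
  ultimately show False using P0 tz unfolding extreme_point_of_def by blast
qed

lemma pt_in_hull3:
  assumes "0 \<le> a" "0 \<le> b" "0 \<le> c" "a + b + c = 1" "u = a *\<^sub>R p + b *\<^sub>R q + c *\<^sub>R r"
  shows "u \<in> convex hull {p, q, r}"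
  unfolding convex_hull_3 using assms by blast

lemma Up_Tsp: "Up a b \<subseteq> Tsp (a + b) b"
  unfolding Up_def Tsp_def
proof (intro hull_minimal convex_convex_hull)
  show "R ` {a, b, -a-b-b} \<subseteq> convex hull (R ` {-(a+b)-b, (a+b)+(a+b)-b, -(a+b)+b+b})"
    unfolding image_insert image_empty
  proof (intro insert_subsetI empty_subsetI)
    show "R a \<in> convex hull {R (-(a+b)-b), R ((a+b)+(a+b)-b), R (-(a+b)+b+b)}"
      by (rule pt_in_hull3[where a="1/3" and b="2/3" and c=0])
        (auto simp: R_def prod_eq_iff field_simps)
    show "R b \<in> convex hull {R (-(a+b)-b), R ((a+b)+(a+b)-b), R (-(a+b)+b+b)}"
      by (rule pt_in_hull3[where a=0 and b="1/3" and c="2/3"])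
        (auto simp: R_def prod_eq_iff field_simps)
    show "R (-a-b-b) \<in> convex hull {R (-(a+b)-b), R ((a+b)+(a+b)-b), R (-(a+b)+b+b)}"
      by (rule pt_in_hull3[where a=1 and b=0 and c=0])
        (auto simp: R_def prod_eq_iff field_simps)
  qed
qed

lemma Tp_Tsp: "Tp (a + b) b \<subseteq> Tsp (a + b) b"
  unfolding Tp_def Tsp_def
proof (intro hull_minimal convex_convex_hull)
  show "R ` {a + b, b, -(a+b)-b} \<subseteq> convex hull (R ` {-(a+b)-b, (a+b)+(a+b)-b, -(a+b)+b+b})"
    unfolding image_insert image_empty
  proof (intro insert_subsetI empty_subsetI)
    show "R (a + b) \<in> convex hull {R (-(a+b)-b), R ((a+b)+(a+b)-b), R (-(a+b)+b+b)}"
      by (rule pt_in_hull3[where a=0 and b="2/3" and c="1/3"])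
        (auto simp: R_def prod_eq_iff field_simps)
    show "R b \<in> convex hull {R (-(a+b)-b), R ((a+b)+(a+b)-b), R (-(a+b)+b+b)}"
      by (rule pt_in_hull3[where a=0 and b="1/3" and c="2/3"])
        (auto simp: R_def prod_eq_iff field_simps)
    show "R (-(a+b)-b) \<in> convex hull {R (-(a+b)-b), R ((a+b)+(a+b)-b), R (-(a+b)+b+b)}"
      by (rule pt_in_hull3[where a=1 and b=0 and c=0])
        (auto simp: R_def prod_eq_iff field_simps)
  qed
qed


lemma K_comb:
  assumes "convex K" "0 \<in> K" "R p \<in> K" "R q \<in> K" "0 \<le> \<alpha>" "0 \<le> \<beta>" "\<alpha> + \<beta> \<le> 1"
    "R w = \<alpha> *\<^sub>R R p + \<beta> *\<^sub>R R q"
  shows "R w \<in> K"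
proof -
  have "R w \<in> convex hull {0, R p, R q}"
    by (rule pt_in_hull3[where a="1 - \<alpha> - \<beta>" and b=\<alpha> and c=\<beta>]) (use assms in auto)
  moreover have "convex hull {0, R p, R q} \<subseteq> K"
    using assms by (intro hull_minimal) auto
  ultimately show ?thesis by blast
qed

lemma K_scale:
  assumes "convex K" "0 \<in> K" "R p \<in> K" "0 \<le> \<alpha>" "\<alpha> \<le> 1" "R w = \<alpha> *\<^sub>R R p"
  shows "R w \<in> K"
  using K_comb[OF assms(1,2,3,3) assms(4) _ _, of 0 w] assms(5,6) by simp

lemma para:
  assumes d: "idet p q = d" "d \<ge> 2"
  shows "\<exists>w a b. d * fst w = a * fst p + b * fst q \<and> d * snd w = a * snd p + b * snd q \<and>
     0 \<le> a \<and> 0 \<le> b \<and> a + b \<le> d \<and> (0 < a \<or> 0 < b) \<and> a < d \<and> b < d"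
proof -
  obtain p1 p2 q1 q2 where pq: "p = (p1, p2)" "q = (q1, q2)" by (cases p, cases q)
  have dd: "d = p1 * q2 - p2 * q1" using d by (simp add: idet_def pq)
  have "\<exists>e1 e2. \<not> (d dvd (e1 * q2 - e2 * q1) \<and> d dvd (p1 * e2 - p2 * e1))"
  proof (rule ccontr)
    assume "\<not> ?thesis"
    then have A: "\<forall>e1 e2. d dvd (e1 * q2 - e2 * q1) \<and> d dvd (p1 * e2 - p2 * e1)" by blast
    have "d dvd (1 * q2 - 0 * q1) \<and> d dvd (p1 * 0 - p2 * 1)" using A by blast
    then have h1: "d dvd q2" "d dvd p2" by auto
    have "d dvd (0 * q2 - 1 * q1) \<and> d dvd (p1 * 1 - p2 * 0)" using A by blast
    then have h2: "d dvd q1" "d dvd p1" by auto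
    have "d * d dvd p1 * q2" using h1 h2 by (simp add: mult_dvd_mono)
    moreover have "d * d dvd p2 * q1" using h1 h2 by (simp add: mult_dvd_mono)
    ultimately have "d * d dvd p1 * q2 - p2 * q1" by (rule dvd_diff)
    then have "d * d dvd d * 1" using dd by simp
    then have "d dvd 1" using d by (subst (asm) dvd_times_left_cancel_iff) auto
    then show False using d by auto
  qed
  then obtain e1 e2 where e: "\<not> (d dvd (e1 * q2 - e2 * q1) \<and> d dvd (p1 * e2 - p2 * e1))" by blast
  define \<alpha> where "\<alpha> = e1 * q2 - e2 * q1"
  define \<beta> where "\<beta> = p1 * e2 - p2 * e1"
  have id1: "d * e1 = \<alpha> * p1 + \<beta> * q1" unfolding dd \<alpha>_def \<beta>_def by algebra
  have id2: "d * e2 = \<alpha> * p2 + \<beta> * q2" unfolding dd \<alpha>_def \<beta>_def by algebra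
  define a0 where "a0 = \<alpha> mod d"
  define b0 where "b0 = \<beta> mod d"
  define k1 where "k1 = \<alpha> div d"
  define k2 where "k2 = \<beta> div d"
  have ak: "\<alpha> = d * k1 + a0" "\<beta> = d * k2 + b0" unfolding a0_def b0_def k1_def k2_def by simp_all
  have b: "0 \<le> a0" "a0 < d" "0 \<le> b0" "b0 < d" using d unfolding a0_def b0_def by simp_all
  have nz: "0 < a0 \<or> 0 < b0"
  proof (rule ccontr)
    assume "\<not> ?thesis"
    then have "a0 = 0" "b0 = 0" using b by auto
    then have "d dvd \<alpha>" "d dvd \<beta>" unfolding a0_def b0_def by auto
    then show False using e unfolding \<alpha>_def \<beta>_def by blast
  qed
  define w1 where "w1 = e1 - k1 * p1 - k2 * q1"
  define w2 where "w2 = e2 - k1 * p2 - k2 * q2"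
  have w1: "d * w1 = a0 * p1 + b0 * q1"
    unfolding w1_def using id1 ak by algebra
  have w2: "d * w2 = a0 * p2 + b0 * q2"
    unfolding w2_def using id2 ak by algebra
  show ?thesis
  proof (cases "a0 + b0 \<le> d")
    case True
    then show ?thesis using w1 w2 b nz pq
      by (intro exI[of _ "(w1, w2)"] exI[of _ a0] exI[of _ b0]) auto
  next
    case False
    have "d * (p1 + q1 - w1) = (d - a0) * p1 + (d - b0) * q1" using w1 by algebra
    moreover have "d * (p2 + q2 - w2) = (d - a0) * p2 + (d - b0) * q2" using w2 by algebra
    ultimately show ?thesis using b False pq
      by (intro exI[of _ "(p1 + q1 - w1, p2 + q2 - w2)"] exI[of _ "d - a0"] exI[of _ "d - b0"]) auto
  qed
qed

lemma condC_D: "condC K \<Longrightarrow> z \<noteq> 0 \<Longrightarrow> t > 1 \<Longrightarrow> t *\<^sub>R R z \<notin> K"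
  unfolding condC_def by blast

lemma R_comb:
  assumes "d * fst w = a * fst p + b * fst q" "d * snd w = a * snd p + b * snd q" "d \<noteq> 0"
  shows "R w = (of_int a / of_int d) *\<^sub>R R p + (of_int b / of_int d) *\<^sub>R R q"
proof -
  have h1: "real_of_int d * of_int (fst w) = of_int a * of_int (fst p) + of_int b * of_int (fst q)"
    using arg_cong[OF assms(1), of real_of_int] by simp
  have h2: "real_of_int d * of_int (snd w) = of_int a * of_int (snd p) + of_int b * of_int (snd q)"
    using arg_cong[OF assms(2), of real_of_int] by simp
  have d: "real_of_int d \<noteq> 0" using assms(3) by simp
  show ?thesis using h1 h2 d by (simp add: R_def prod_eq_iff field_simps)
qed

lemma idet_comb:
  assumes "d * fst w = a * fst p + b * fst q" "d * snd w = a * snd p + b * snd q"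
  shows "d * idet r w = a * idet r p + b * idet r q"
proof -
  have "d * idet r w = fst r * (d * snd w) - snd r * (d * fst w)" by (simp add: idet_def algebra_simps)
  also have "\<dots> = a * idet r p + b * idet r q" unfolding assms by (simp add: idet_def algebra_simps)
  finally show ?thesis .
qed

lemma idet_self[simp]: "idet p p = 0"
  by (simp add: idet_def)
lemma idet_anti: "idet q p = - idet p q"
  by (simp add: idet_def)

lemma descent1:
  assumes K: "convex K" "0 \<in> K" "condC K" and p: "R p \<in> K"
  shows "R q \<in> K \<Longrightarrow> idet p q \<ge> 1 \<Longrightarrow> \<exists>q'. R q' \<in> K \<and> idet p q' = 1"
proof (induction "nat (idet p q)" arbitrary: q rule: less_induct)
  case less
  show ?case
  proof (cases "idet p q = 1")
    case True then show ?thesis using less.prems by blast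
  next
    case False
    define d where "d = idet p q"
    have d2: "d \<ge> 2" using False less.prems by (simp add: d_def)
    obtain w a b where w: "d * fst w = a * fst p + b * fst q" "d * snd w = a * snd p + b * snd q"
      "0 \<le> a" "0 \<le> b" "a + b \<le> d" "0 < a \<or> 0 < b" "a < d" "b < d"
      using para[OF d_def[symmetric] d2] by blast
    have dr: "real_of_int d > 0" using d2 by simp
    have Rw: "R w = (of_int a / of_int d) *\<^sub>R R p + (of_int b / of_int d) *\<^sub>R R q"
      using R_comb[OF w(1,2)] d2 by simp
    have wK: "R w \<in> K"
    proof (rule K_comb[OF K(1,2) p less.prems(1) _ _ _ Rw])
      show "0 \<le> real_of_int a / real_of_int d" using w dr by simp
      show "0 \<le> real_of_int b / real_of_int d" using w dr by simp
      have "real_of_int a + real_of_int b \<le> real_of_int d" using w(5) by linarith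
      then show "real_of_int a / real_of_int d + real_of_int b / real_of_int d \<le> 1"
        using dr by (simp add: add_divide_distrib[symmetric])
    qed
    have "d * idet p w = a * idet p p + b * idet p q" by (rule idet_comb[OF w(1,2)])
    then have "d * idet p w = d * b" by (simp add: d_def)
    then have dw: "idet p w = b" using d2 by simp
    show ?thesis
    proof (cases "b = 0")
      case True
      then have a: "0 < a" "a < d" using w by auto
      have pnz: "p \<noteq> 0" using d2 by (auto simp: d_def idet_def zero_prod_def)
      have Rp: "R p = (of_int d / of_int a) *\<^sub>R R w"
        using Rw True a dr by (simp add: R_def prod_eq_iff field_simps)
      have wnz: "w \<noteq> 0"
      proof
        assume "w = 0"
        then have "R p = 0" using Rp by simp
        then show False using pnz by (simp only: R_eq_0_iff)
      qed
      have "real_of_int d / of_int a > 1" using a by simp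
      then have "(of_int d / of_int a) *\<^sub>R R w \<notin> K"
        using condC_D[OF K(3) wnz] by blast
      then show ?thesis using p Rp by simp
    next
      case False
      then have "nat (idet p w) < nat (idet p q)" "idet p w \<ge> 1" using dw w by (auto simp: d_def)
      then show ?thesis using less.hyps wK by blast
    qed
  qed
qed

lemma idet_ident:
  "idet p q * fst e = idet e q * fst p + idet p e * fst q"
  "idet p q * snd e = idet e q * snd p + idet p e * snd q"
  unfolding idet_def by algebra+

lemma func_pos:
  assumes "K = convex hull (R ` S')" "0 \<in> interior K" "c \<noteq> 0"
  shows "\<exists>s\<in>S'. fst c * fst s + snd c * snd s > 0"
proof (rule ccontr)
  assume neg: "\<not> ?thesis"
  have "\<forall>s\<in>S'. inner (R c) (R s) \<le> 0"
  proof
    fix s assume "s \<in> S'"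
    then have "fst c * fst s + snd c * snd s \<le> 0" using neg by auto
    then show "inner (R c) (R s) \<le> 0" unfolding inner_R by (metis of_int_0 of_int_le_iff)
  qed
  then have "R ` S' \<subseteq> {v. inner (R c) v \<le> 0}" by auto
  then have hK: "K \<subseteq> {v. inner (R c) v \<le> 0}"
    unfolding assms(1) by (intro hull_minimal) (auto simp: convex_halfspace_le)
  obtain e where e: "e > 0" "ball 0 e \<subseteq> K" using assms(2) mem_interior by blast
  have nc: "norm (R c) > 0" using assms(3) by simp
  define x where "x = (e / (2 * norm (R c))) *\<^sub>R R c"
  have "norm x = e / 2" using nc e by (simp add: x_def)
  then have "x \<in> K" using e by auto
  moreover have "inner (R c) x = (e / (2 * norm (R c))) * (norm (R c))^2"
    by (simp add: x_def power2_norm_eq_inner)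
  moreover have "(e / (2 * norm (R c))) * (norm (R c))^2 > 0" using nc e by simp
  ultimately show False using hK by force
qed

lemma opp_from_coll:
  assumes K: "convex K" "0 \<in> K" and "R p \<in> K" "R r \<in> K" "p \<noteq> 0" "r \<noteq> 0" "n > 0" "m < 0"
    "n * fst r = m * fst p" "n * snd r = m * snd p"
  shows "\<exists>u. u \<noteq> 0 \<and> R u \<in> K \<and> R (-u) \<in> K"
proof -
  have c1: "real_of_int n * of_int (fst r) = of_int m * of_int (fst p)"
    using arg_cong[OF assms(9), of real_of_int] by simp
  have c2: "real_of_int n * of_int (snd r) = of_int m * of_int (snd p)"
    using arg_cong[OF assms(10), of real_of_int] by simp
  have nr: "real_of_int n > 0" "real_of_int m < 0" using assms by auto
  show ?thesis
  proof (cases "-m \<le> n")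
    case True
    have eq: "R (-r) = (- of_int m / of_int n) *\<^sub>R R p"
      using c1 c2 nr by (simp add: R_def prod_eq_iff field_simps)
    moreover have le: "- real_of_int m / of_int n \<le> 1"
    proof -
      have "real_of_int (-m) \<le> real_of_int n" using True by (simp only: of_int_le_iff)
      then show ?thesis using divide_le_eq_1_pos[of "real_of_int n" "- real_of_int m"] nr by simp
    qed
    have ge: "0 \<le> - real_of_int m / of_int n" using nr by (intro divide_nonneg_pos) auto
    have "R (-r) \<in> K" by (rule K_scale[OF K assms(3) ge le eq])
    then show ?thesis using assms by blast
  next
    case False
    have eq: "R (-p) = (of_int n / (- of_int m)) *\<^sub>R R r"
      using c1 c2 nr by (simp add: R_def prod_eq_iff field_simps)
    moreover have le: "real_of_int n / (- of_int m) \<le> 1"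
    proof -
      have "real_of_int n \<le> real_of_int (-m)" using False by (simp only: of_int_le_iff)
      then show ?thesis using divide_le_eq_1_pos[of "- real_of_int m" "real_of_int n"] nr by simp
    qed
    have ge: "0 \<le> real_of_int n / (- of_int m)" using nr by (intro divide_nonneg_pos) auto
    have "R (-p) \<in> K" by (rule K_scale[OF K assms(4) ge le eq])
    then show ?thesis using assms by blast
  qed
qed

definition Res :: "(real \<times> real) set \<Rightarrow> bool" where
  "Res K \<longleftrightarrow> (\<exists>a b. uni a b \<and> (R ` {a, b, -a-b} \<subseteq> K \<or> R ` {a, b, -a, -b} \<subseteq> K \<or> R ` {a, b, -a-b-b} \<subseteq> K))"

lemma ResT: "uni a b \<Longrightarrow> R a \<in> K \<Longrightarrow> R b \<in> K \<Longrightarrow> R (-a-b) \<in> K \<Longrightarrow> Res K"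
  unfolding Res_def by (intro exI[of _ a] exI[of _ b]) auto
lemma ResS: "uni a b \<Longrightarrow> R a \<in> K \<Longrightarrow> R b \<in> K \<Longrightarrow> R (-a) \<in> K \<Longrightarrow> R (-b) \<in> K \<Longrightarrow> Res K"
  unfolding Res_def by (intro exI[of _ a] exI[of _ b]) auto
lemma ResU: "uni a b \<Longrightarrow> R a \<in> K \<Longrightarrow> R b \<in> K \<Longrightarrow> R (-a-b-b) \<in> K \<Longrightarrow> Res K"
  unfolding Res_def by (intro exI[of _ a] exI[of _ b]) auto

lemma opp_res:
  assumes S: "K = convex hull (R ` S')" and i: "0 \<in> interior K" and C: "condC K"
    and u: "u \<noteq> 0" "R u \<in> K" "R (-u) \<in> K"
  shows "Res K"
proof -
  have cK: "convex K" using S by simp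
  have K0: "0 \<in> K" using i interior_subset by blast
  have SK: "R s \<in> K" if "s \<in> S'" for s using that S hull_subset[of "R ` S'" convex] by blast
  have c1: "(- snd u, fst u) \<noteq> 0" using u(1) by (auto simp: prod_eq_iff zero_prod_def)
  obtain q0 where q0: "q0 \<in> S'" "fst (- snd u, fst u) * fst q0 + snd (- snd u, fst u) * snd q0 > 0"
    using func_pos[OF S i c1] by blast
  have "idet u q0 \<ge> 1" using q0(2) by (simp add: idet_def algebra_simps)
  then obtain q where q: "R q \<in> K" "idet u q = 1"
    using descent1[OF cK K0 C u(2) SK[OF q0(1)]] by blast
  have c2: "(snd u, - fst u) \<noteq> 0" using u(1) by (auto simp: prod_eq_iff zero_prod_def)
  obtain r0 where r0: "r0 \<in> S'" "fst (snd u, - fst u) * fst r0 + snd (snd u, - fst u) * snd r0 > 0"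
    using func_pos[OF S i c2] by blast
  have "idet (-u) r0 \<ge> 1" using r0(2) by (simp add: idet_def algebra_simps)
  then obtain r where r: "R r \<in> K" "idet (-u) r = 1"
    using descent1[OF cK K0 C u(3) SK[OF r0(1)]] by blast
  have ur: "idet u r = -1" using r(2) by (simp add: idet_def)
  define x where "x = idet r q"
  have rx: "fst r = x * fst u - fst q" "snd r = x * snd u - snd q"
    using idet_ident[of u q r] q(2) ur by (simp_all add: x_def)
  have mid: "(1/2) *\<^sub>R R q + (1 - 1/2) *\<^sub>R R r \<in> K" using q(1) r(1) cK by (intro convexD) auto
  have mid2: "(1/2) *\<^sub>R R q + (1 - 1/2) *\<^sub>R R r = (of_int x / 2) *\<^sub>R R u"
  proof -
    have a: "real_of_int (fst r) = of_int x * of_int (fst u) - of_int (fst q)"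
      using arg_cong[OF rx(1), of real_of_int] by simp
    have b: "real_of_int (snd r) = of_int x * of_int (snd u) - of_int (snd q)"
      using arg_cong[OF rx(2), of real_of_int] by simp
    show ?thesis by (simp add: R_def prod_eq_iff field_simps a b)
  qed
  have xle: "x \<le> 2"
  proof (rule ccontr)
    assume "\<not> x \<le> 2"
    then have "real_of_int x / 2 > 1" by simp
    then have "(of_int x / 2) *\<^sub>R R u \<notin> K" using condC_D[OF C u(1)] by blast
    then show False using mid mid2 by simp
  qed
  have xge: "x \<ge> -2"
  proof (rule ccontr)
    assume "\<not> x \<ge> -2"
    then have "- real_of_int x / 2 > 1" by simp
    moreover have "-u \<noteq> 0" using u(1) by simp
    ultimately have "(- of_int x / 2) *\<^sub>R R (-u) \<notin> K" using condC_D[OF C] by blast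
    then show False using mid mid2 by simp
  qed
  have uq: "uni u q" using q(2) by (simp add: uni_def)
  have "x = -2 \<or> x = -1 \<or> x = 0 \<or> x = 1 \<or> x = 2" using xle xge by auto
  then show ?thesis
  proof (elim disjE)
    assume x: "x = 0"
    have "-q = r" using rx x by (simp add: prod_eq_iff)
    then show ?thesis using ResS[OF uq u(2) q(1) u(3)] r(1) by simp
  next
    assume x: "x = 1"
    have "-r-q = -u" using rx x by (simp add: prod_eq_iff)
    moreover have "uni r q" using x by (simp add: uni_def x_def)
    ultimately show ?thesis using ResT[of r q K] r(1) q(1) u(3) by simp
  next
    assume x: "x = -1"
    have "-u-q = r" using rx x by (simp add: prod_eq_iff)
    then show ?thesis using ResT[OF uq u(2) q(1)] r(1) by simp
  next
    assume x: "x = 2"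
    have "-q-(-u)-(-u) = r" using rx x by (simp add: prod_eq_iff)
    moreover have "uni q (-u)" using q(2) by (simp add: uni_def idet_def algebra_simps)
    ultimately show ?thesis using ResU[of q "-u" K] r(1) q(1) u(3) by simp
  next
    assume x: "x = -2"
    have "-r-u-u = q" using rx x by (simp add: prod_eq_iff)
    moreover have "uni r u" using ur by (simp add: uni_def idet_def algebra_simps)
    ultimately show ?thesis using ResU[of r u K] r(1) q(1) u(2) by simp
  qed
qed

lemma not_scaled:
  assumes C: "condC K" and qK: "R q \<in> K" and q: "q \<noteq> 0"
    and w: "d * fst w = b * fst q" "d * snd w = b * snd q" and b: "0 < b" "b < d"
  shows False
proof -
  have dr: "real_of_int d > 0" "real_of_int b > 0" using b by auto
  have a: "real_of_int d * of_int (fst w) = of_int b * of_int (fst q)"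
    using arg_cong[OF w(1), of real_of_int] by simp
  have c: "real_of_int d * of_int (snd w) = of_int b * of_int (snd q)"
    using arg_cong[OF w(2), of real_of_int] by simp
  have Rq: "R q = (of_int d / of_int b) *\<^sub>R R w"
    using a c dr by (simp add: R_def prod_eq_iff field_simps)
  have wnz: "w \<noteq> 0"
  proof
    assume "w = 0"
    then have "R q = 0" using Rq by simp
    then show False using q by (simp only: R_eq_0_iff)
  qed
  have "real_of_int d / of_int b > 1" using b by simp
  then have "(of_int d / of_int b) *\<^sub>R R w \<notin> K" using condC_D[OF C wnz] by blast
  then show False using qK Rq by simp
qed

lemma triple_step:
  assumes K: "convex K" "0 \<in> K" "condC K" and pK: "R p \<in> K" "R q \<in> K" "R r \<in> K"
    and D: "idet p q \<ge> 2" "idet q r > 0" "idet r p > 0"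
  shows "(\<exists>p' q' r'. R p' \<in> K \<and> R q' \<in> K \<and> R r' \<in> K \<and> idet p' q' > 0 \<and> idet q' r' > 0 \<and>
            idet r' p' > 0 \<and> idet p' q' + idet q' r' + idet r' p' < idet p q + idet q r + idet r p)
         \<or> (\<exists>u. u \<noteq> 0 \<and> R u \<in> K \<and> R (-u) \<in> K)"
proof -
  define D1 where "D1 = idet p q"
  define D2 where "D2 = idet q r"
  define D3 where "D3 = idet r p"
  have D': "D1 \<ge> 2" "D2 > 0" "D3 > 0" using D by (auto simp: D1_def D2_def D3_def)
  obtain w a b where w: "D1 * fst w = a * fst p + b * fst q" "D1 * snd w = a * snd p + b * snd q"
      "0 \<le> a" "0 \<le> b" "a + b \<le> D1" "0 < a \<or> 0 < b" "a < D1" "b < D1"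
    using para[OF D1_def[symmetric] D'(1)] by blast
  have dr: "real_of_int D1 > 0" using D' by simp
  have Rw: "R w = (of_int a / of_int D1) *\<^sub>R R p + (of_int b / of_int D1) *\<^sub>R R q"
    using R_comb[OF w(1,2)] D' by simp
  have wK: "R w \<in> K"
  proof (rule K_comb[OF K(1,2) pK(1,2) _ _ _ Rw])
    show "0 \<le> real_of_int a / real_of_int D1" using w dr by simp
    show "0 \<le> real_of_int b / real_of_int D1" using w dr by simp
    have "real_of_int a + real_of_int b \<le> real_of_int D1" using w(5) by linarith
    then show "real_of_int a / real_of_int D1 + real_of_int b / real_of_int D1 \<le> 1"
      using dr by (simp add: add_divide_distrib[symmetric])
  qed
  have pnz: "p \<noteq> 0" using D' by (auto simp: D1_def idet_def zero_prod_def)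
  have qnz: "q \<noteq> 0" using D' by (auto simp: D1_def idet_def zero_prod_def)
  have rnz: "r \<noteq> 0" using D' by (auto simp: D2_def idet_def zero_prod_def)
  have a0: "a > 0"
  proof (rule ccontr)
    assume "\<not> a > 0"
    then have "a = 0" using w by simp
    then have "D1 * fst w = b * fst q" "D1 * snd w = b * snd q" "0 < b" using w by auto
    then show False using not_scaled[OF K(3) pK(2) qnz] w by blast
  qed
  have b0: "b > 0"
  proof (rule ccontr)
    assume "\<not> b > 0"
    then have "b = 0" using w by simp
    then have "D1 * fst w = a * fst p" "D1 * snd w = a * snd p" using w by auto
    then show False using not_scaled[OF K(3) pK(1) pnz] w a0 by blast
  qed
  have "D1 * idet q w = a * idet q p + b * idet q q" by (rule idet_comb[OF w(1,2)])
  then have "D1 * idet w q = D1 * a" by (simp add: D1_def idet_anti[of q p] idet_anti[of q w])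
  then have wq: "idet w q = a" using D' by simp
  have "D1 * idet p w = a * idet p p + b * idet p q" by (rule idet_comb[OF w(1,2)])
  then have "D1 * idet p w = D1 * b" by (simp add: D1_def)
  then have pw: "idet p w = b" using D' by simp
  have "D1 * idet r w = a * idet r p + b * idet r q" by (rule idet_comb[OF w(1,2)])
  then have E: "D1 * idet r w = a * D3 - b * D2" by (simp add: D2_def D3_def idet_anti[of r q])
  consider "idet r w > 0" | "idet r w < 0" | "idet r w = 0" by linarith
  then show ?thesis
  proof cases
    case 1
    have "D1 * idet r w < D1 * D3"
    proof -
      have "b * D2 > 0" using b0 D' by simp
      moreover have "a * D3 \<le> D1 * D3" using w(7) D' by (intro mult_right_mono) auto
      ultimately show ?thesis using E by linarith
    qed
    then have "idet r w < D3" using D' by (simp add: mult_less_cancel_left_pos)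
    then have "idet w q + idet q r + idet r w < idet p q + idet q r + idet r p"
      using wq w(7) by (simp add: D1_def D3_def)
    then show ?thesis using wK pK 1 wq a0 D by blast
  next
    case 2
    have "D1 * (- idet r w) < D1 * D2"
    proof -
      have "a * D3 > 0" using a0 D' by simp
      moreover have "b * D2 \<le> D1 * D2" using w(8) D' by (intro mult_right_mono) auto
      ultimately show ?thesis using E by linarith
    qed
    then have "- idet r w < D2" using D' mult_less_cancel_left_pos[of D1 "- idet r w" D2] by linarith
    then have "idet p w + idet w r + idet r p < idet p q + idet q r + idet r p"
      using pw w(8) idet_anti[of w r] by (simp add: D1_def D2_def)
    moreover have "idet w r > 0" using 2 idet_anti[of w r] by simp
    ultimately show ?thesis using wK pK pw b0 D by blast
  next
    case 3
    then have ab: "a * D3 = b * D2" using E by simp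
    have id1: "D1 * fst r = - D2 * fst p - D3 * fst q"
      using idet_ident(1)[of p q r] idet_anti[of r q] idet_anti[of p r]
      by (simp add: D1_def D2_def D3_def)
    have id2: "D1 * snd r = - D2 * snd p - D3 * snd q"
      using idet_ident(2)[of p q r] idet_anti[of r q] idet_anti[of p r]
      by (simp add: D1_def D2_def D3_def)
    have "D1 * (D2 * fst w + a * fst r) = 0" using w(1) id1 ab by algebra
    then have c1: "D2 * fst w = - a * fst r" using D' by simp
    have "D1 * (D2 * snd w + a * snd r) = 0" using w(2) id2 ab by algebra
    then have c2: "D2 * snd w = - a * snd r" using D' by simp
    have wnz: "w \<noteq> 0"
    proof
      assume "w = 0"
      then have "a * fst r = 0" "a * snd r = 0" using c1 c2 by auto
      then show False using a0 rnz by (simp add: prod_eq_iff)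
    qed
    have "\<exists>u. u \<noteq> 0 \<and> R u \<in> K \<and> R (-u) \<in> K"
      by (rule opp_from_coll[OF K(1,2) pK(3) wK rnz wnz D'(2) _ c1 c2]) (use a0 in simp)
    then show ?thesis by blast
  qed
qed

lemma triple_res:
  assumes S: "K = convex hull (R ` S')" and i: "0 \<in> interior K" and C: "condC K"
  shows "R p \<in> K \<Longrightarrow> R q \<in> K \<Longrightarrow> R r \<in> K \<Longrightarrow> idet p q > 0 \<Longrightarrow> idet q r > 0 \<Longrightarrow> idet r p > 0
    \<Longrightarrow> Res K"
proof (induction "nat (idet p q + idet q r + idet r p)" arbitrary: p q r rule: less_induct)
  case less
  have cK: "convex K" using S by simp
  have K0: "0 \<in> K" using i interior_subset by blast
  have IH: "Res K" if "(\<exists>p' q' r'. R p' \<in> K \<and> R q' \<in> K \<and> R r' \<in> K \<and> idet p' q' > 0 \<and> idet q' r' > 0 \<and>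
            idet r' p' > 0 \<and> idet p' q' + idet q' r' + idet r' p' < idet p q + idet q r + idet r p)
         \<or> (\<exists>u. u \<noteq> 0 \<and> R u \<in> K \<and> R (-u) \<in> K)"
    using that
  proof (elim disjE exE conjE)
    fix p' q' r' assume h: "R p' \<in> K" "R q' \<in> K" "R r' \<in> K" "idet p' q' > 0" "idet q' r' > 0"
      "idet r' p' > 0" "idet p' q' + idet q' r' + idet r' p' < idet p q + idet q r + idet r p"
    then have "nat (idet p' q' + idet q' r' + idet r' p') < nat (idet p q + idet q r + idet r p)"
      by simp
    then show "Res K" using less.hyps h by blast
  next
    fix u assume "u \<noteq> 0" "R u \<in> K" "R (-u) \<in> K"
    then show "Res K" using opp_res[OF S i C] by blast
  qed
  consider "idet p q = 1" "idet q r = 1" "idet r p = 1" | "idet p q \<ge> 2" | "idet q r \<ge> 2" | "idet r p \<ge> 2"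
    using less.prems by linarith
  then show ?case
  proof cases
    case 1
    have "1 * fst r = - 1 * fst p - 1 * fst q"
      using idet_ident(1)[of p q r] idet_anti[of r q] idet_anti[of p r] 1 by simp
    moreover have "1 * snd r = - 1 * snd p - 1 * snd q"
      using idet_ident(2)[of p q r] idet_anti[of r q] idet_anti[of p r] 1 by simp
    ultimately have "r = -p-q" by (simp add: prod_eq_iff)
    moreover have "uni p q" using 1 by (simp add: uni_def)
    ultimately show ?thesis using ResT[of p q K] less.prems by simp
  next
    case 2
    show ?thesis by (rule IH, rule triple_step[OF cK K0 C less.prems(1-3) 2 less.prems(5,6)])
  next
    case 3
    have "(\<exists>p' q' r'. R p' \<in> K \<and> R q' \<in> K \<and> R r' \<in> K \<and> idet p' q' > 0 \<and> idet q' r' > 0 \<and>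
            idet r' p' > 0 \<and> idet p' q' + idet q' r' + idet r' p' < idet q r + idet r p + idet p q)
         \<or> (\<exists>u. u \<noteq> 0 \<and> R u \<in> K \<and> R (-u) \<in> K)"
      by (rule triple_step[OF cK K0 C less.prems(2,3,1) 3 less.prems(6,4)])
    then show ?thesis by (intro IH) (simp add: add_ac)
  next
    case 4
    have "(\<exists>p' q' r'. R p' \<in> K \<and> R q' \<in> K \<and> R r' \<in> K \<and> idet p' q' > 0 \<and> idet q' r' > 0 \<and>
            idet r' p' > 0 \<and> idet p' q' + idet q' r' + idet r' p' < idet r p + idet p q + idet q r)
         \<or> (\<exists>u. u \<noteq> 0 \<and> R u \<in> K \<and> R (-u) \<in> K)"
      by (rule triple_step[OF cK K0 C less.prems(3,1,2) 4 less.prems(4,5)])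
    then show ?thesis by (intro IH) (simp add: add_ac)
  qed
qed

lemma frac_le_cross:
  fixes x1 y1 x2 y2 :: int
  assumes "y1 > 0" "y2 > 0" "real_of_int x1 / of_int y1 \<le> real_of_int x2 / of_int y2"
  shows "x1 * y2 \<le> x2 * y1"
proof -
  have "real_of_int y1 > 0" "real_of_int y2 > 0" using assms by auto
  then have "real_of_int x1 * of_int y2 \<le> of_int x2 * of_int y1"
    using assms(3) by (simp add: field_simps)
  then have "real_of_int (x1 * y2) \<le> real_of_int (x2 * y1)" by simp
  then show ?thesis by (simp only: of_int_le_iff)
qed

lemma lemA_int:
  assumes S: "K = convex hull (R ` S')" and fin: "finite S'" and i: "0 \<in> interior K" and C: "condC K"
  shows "Res K"
proof -
  have cK: "convex K" using S by simp
  have K0: "0 \<in> K" using i interior_subset by blast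
  have SK: "R s \<in> K" if "s \<in> S'" for s using that S hull_subset[of "R ` S'" convex] by blast
  have c0: "((1::int), (0::int)) \<noteq> 0" by (simp add: zero_prod_def)
  obtain p where p: "p \<in> S'" "fst (1::int, 0::int) * fst p + snd (1::int, 0::int) * snd p > 0"
    using func_pos[OF S i c0] by blast
  have pnz: "p \<noteq> 0" using p(2) by (auto simp: zero_prod_def)
  define A where "A = {s \<in> S'. idet p s > 0}"
  have c1: "(- snd p, fst p) \<noteq> 0" using pnz by (auto simp: prod_eq_iff zero_prod_def)
  obtain s0 where s0: "s0 \<in> S'" "fst (- snd p, fst p) * fst s0 + snd (- snd p, fst p) * snd s0 > 0"
    using func_pos[OF S i c1] by blast
  have "s0 \<in> A" using s0 by (simp add: A_def idet_def algebra_simps)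
  then have Ane: "A \<noteq> {}" by blast
  have Afin: "finite A" using fin by (simp add: A_def)
  define f where "f s = real_of_int (fst p * fst s + snd p * snd s) / real_of_int (idet p s)" for s
  have "Min (f ` A) \<in> f ` A" using Afin Ane by (intro Min_in) auto
  then obtain q where q: "q \<in> A" "f q = Min (f ` A)" by (metis imageE)
  have qmin: "f q \<le> f s" if "s \<in> A" for s using q Afin that by simp
  have qS: "q \<in> S'" and pq: "idet p q > 0" using q(1) by (auto simp: A_def)
  have qnz: "q \<noteq> 0" using pq by (auto simp: idet_def zero_prod_def)
  have c2: "(- snd q, fst q) \<noteq> 0" using qnz by (auto simp: prod_eq_iff zero_prod_def)
  obtain r where r: "r \<in> S'" "fst (- snd q, fst q) * fst r + snd (- snd q, fst q) * snd r > 0"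
    using func_pos[OF S i c2] by blast
  have qr: "idet q r > 0" using r(2) by (simp add: idet_def algebra_simps)
  consider "idet r p > 0" | "idet r p = 0" | "idet r p < 0" by linarith
  then show ?thesis
  proof cases
    case 1
    show ?thesis by (rule triple_res[OF S i C SK[OF p(1)] SK[OF qS] SK[OF r(1)] pq qr 1])
  next
    case 2
    define n where "n = fst p * fst p + snd p * snd p"
    define m where "m = fst r * fst p + snd r * snd p"
    have n0: "n > 0"
    proof -
      have "fst p \<noteq> 0 \<or> snd p \<noteq> 0" using pnz by (auto simp: zero_prod_def prod_eq_iff)
      then show ?thesis unfolding n_def
        by (metis add_pos_nonneg add_nonneg_pos not_real_square_gt_zero zero_le_square
            of_int_0 of_int_less_iff not_square_less_zero linorder_neqE_linordered_idom
            mult_neg_neg mult_pos_pos)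
    qed
    have rp0: "fst r * snd p - snd r * fst p = 0" using 2 by (simp add: idet_def)
    have e1: "n * fst r = m * fst p" unfolding n_def m_def using rp0 by algebra
    have e2: "n * snd r = m * snd p" unfolding n_def m_def using rp0 by algebra
    have "n * idet q r = m * idet q p" unfolding idet_def using e1 e2 by algebra
    then have "n * idet q r = - (m * idet p q)" by (simp add: idet_anti[of q p])
    moreover have "n * idet q r > 0" using n0 qr by simp
    ultimately have "m * idet p q < 0" by linarith
    then have m0: "m < 0" using pq by (simp add: mult_less_0_iff)
    have rnz: "r \<noteq> 0" using qr by (auto simp: idet_def zero_prod_def)
    obtain u where "u \<noteq> 0" "R u \<in> K" "R (-u) \<in> K"
      using opp_from_coll[OF cK K0 SK[OF p(1)] SK[OF r(1)] pnz rnz n0 m0 e1 e2] by blast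
    then show ?thesis using opp_res[OF S i C] by blast
  next
    case 3
    then have pr: "idet p r > 0" using idet_anti[of r p] by simp
    then have "r \<in> A" using r(1) by (simp add: A_def)
    then have "f q \<le> f r" by (rule qmin)
    then have le: "(fst p * fst q + snd p * snd q) * idet p r \<le> (fst p * fst r + snd p * snd r) * idet p q"
      unfolding f_def by (rule frac_le_cross[OF pq pr])
    have ident: "(fst p * fst r + snd p * snd r) * idet p q - (fst p * fst q + snd p * snd q) * idet p r
        = (fst p * fst p + snd p * snd p) * idet r q"
      unfolding idet_def by algebra
    have "(fst p * fst p + snd p * snd p) * idet r q \<ge> 0" using le ident by linarith
    moreover have "fst p * fst p + snd p * snd p > 0"
    proof -
      have "fst p \<noteq> 0 \<or> snd p \<noteq> 0" using pnz by (auto simp: zero_prod_def prod_eq_iff)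
      then show ?thesis
        by (metis add_pos_nonneg add_nonneg_pos zero_le_square not_square_less_zero
            linorder_neqE_linordered_idom mult_neg_neg mult_pos_pos)
    qed
    ultimately have "idet r q \<ge> 0" by (simp add: zero_le_mult_iff)
    then show ?thesis using qr idet_anti[of r q] by simp
  qed
qed

lemma lemA:
  assumes "finite S" "\<forall>v\<in>S. lattice_pt v" "K = convex hull S" "0 \<in> interior K" "condC K"
  shows "\<exists>a b. uni a b \<and> (R ` {a, b, -a-b} \<subseteq> K \<or> R ` {a, b, -a, -b} \<subseteq> K \<or> R ` {a, b, -a-b-b} \<subseteq> K)"
proof -
  have inj: "inj R" by (simp add: inj_def)
  define S' where "S' = R -` S"
  have fin: "finite S'" unfolding S'_def using assms(1) inj by (simp add: finite_vimageI)
  have "R ` S' = S" unfolding S'_def using assms(2) lattice_pt_iff by auto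
  then have "K = convex hull (R ` S')" using assms(3) by simp
  then have "Res K" using lemA_int[OF _ fin assms(4,5)] by blast
  then show ?thesis unfolding Res_def .
qed


lemma T_to_S0:
  assumes G: "\<forall>a b. uni a b \<longrightarrow> G (Sp a b) \<and> G (Hp a b) \<and> G (Tp a b)" and u: "uni a b"
  shows "conn G (Tp a b) (Sp (1,0) (0,1))"
proof -
  have G': "\<forall>a b. uni a b \<longrightarrow> G (Sp a b) \<and> G (Hp a b)" using G by blast
  have g: "G (Sp a b)" "G (Hp a b)" "G (Tp a b)" using G u by blast+
  have "conn G (Tp a b) (Hp a b)" by (rule conn_sub[OF g(3) g(2) Tp_Hp])
  moreover have "conn G (Hp a b) (Sp a b)" by (rule conn_sym[OF conn_sub[OF g(1) g(2) Sp_Hp]])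
  moreover have "conn G (Sp a b) (Sp (1,0) (0,1))" by (rule euclid[OF G' u])
  ultimately show ?thesis using conn_trans by metis
qed

lemma uni_add2: "uni a b \<Longrightarrow> uni (a + b) b"
  by (auto simp: uni_def idet_def algebra_simps)

lemma hull_sub_conv: "X \<subseteq> P \<Longrightarrow> P = convex hull S \<Longrightarrow> convex hull X \<subseteq> P"
  by (metis convex_convex_hull hull_minimal)

lemma anchor_refl:
  assumes P: "reflexive_polygon P"
  shows "conn reflexive_polygon P (Sp (1,0) (0,1))"
proof -
  obtain S where S: "finite S" "\<forall>v\<in>S. lattice_pt v" "P = convex hull S"
    using P unfolding reflexive_polygon_def lattice_polygon_def by blast
  have i: "0 \<in> interior P" using P unfolding reflexive_polygon_def by blast
  have G: "\<forall>a b. uni a b \<longrightarrow> reflexive_polygon (Sp a b) \<and> reflexive_polygon (Hp a b) \<and> reflexive_polygon (Tp a b)"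
    using refl_fams by blast
  obtain a b where u: "uni a b" and
    c: "R ` {a, b, -a-b} \<subseteq> P \<or> R ` {a, b, -a, -b} \<subseteq> P \<or> R ` {a, b, -a-b-b} \<subseteq> P"
    using lemA[OF S i C_refl[OF P]] by blast
  from c show ?thesis
  proof (elim disjE)
    assume "R ` {a, b, -a-b} \<subseteq> P"
    then have "Tp a b \<subseteq> P" unfolding Tp_def using S(3) by (rule hull_sub_conv)
    then have "conn reflexive_polygon P (Tp a b)"
      using conn_sym conn_sub P refl_fams[OF u] by metis
    then show ?thesis using T_to_S0[OF G u] conn_trans by metis
  next
    assume "R ` {a, b, -a, -b} \<subseteq> P"
    then have "Sp a b \<subseteq> P" unfolding Sp_def using S(3) by (rule hull_sub_conv)
    then have "conn reflexive_polygon P (Sp a b)"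
      using conn_sym conn_sub P refl_fams[OF u] by metis
    then show ?thesis using euclid[of reflexive_polygon, OF _ u] G conn_trans by metis
  next
    assume "R ` {a, b, -a-b-b} \<subseteq> P"
    then have "Up a b \<subseteq> P" unfolding Up_def using S(3) by (rule hull_sub_conv)
    then have "conn reflexive_polygon P (Up a b)"
      using conn_sym conn_sub P refl_fams[OF u] by metis
    moreover have "conn reflexive_polygon (Up a b) (Tsp (a + b) b)"
      using conn_sub refl_fams[OF u] refl_fams[OF uni_add2[OF u]] Up_Tsp by metis
    moreover have "conn reflexive_polygon (Tsp (a + b) b) (Tp (a + b) b)"
      using conn_sym conn_sub refl_fams[OF uni_add2[OF u]] Tp_Tsp by metis
    moreover have "conn reflexive_polygon (Tp (a + b) b) (Sp (1,0) (0,1))"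
      using T_to_S0[OF G uni_add2[OF u]] .
    ultimately show ?thesis using conn_trans by metis
  qed
qed

lemma anchor_term:
  assumes P: "terminal_polygon P"
  shows "conn terminal_polygon P (Sp (1,0) (0,1))"
proof -
  obtain S where S: "finite S" "\<forall>v\<in>S. lattice_pt v" "P = convex hull S"
    using P unfolding terminal_polygon_def lattice_polygon_def by blast
  have i: "0 \<in> interior P" using P unfolding terminal_polygon_def by blast
  have G: "\<forall>a b. uni a b \<longrightarrow> terminal_polygon (Sp a b) \<and> terminal_polygon (Hp a b) \<and> terminal_polygon (Tp a b)"
    using term_fams by blast
  obtain a b where u: "uni a b" and
    c: "R ` {a, b, -a-b} \<subseteq> P \<or> R ` {a, b, -a, -b} \<subseteq> P \<or> R ` {a, b, -a-b-b} \<subseteq> P"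
    using lemA[OF S i C_term[OF P]] by blast
  from c show ?thesis
  proof (elim disjE)
    assume "R ` {a, b, -a-b} \<subseteq> P"
    then have "Tp a b \<subseteq> P" unfolding Tp_def using S(3) by (rule hull_sub_conv)
    then have "conn terminal_polygon P (Tp a b)"
      using conn_sym conn_sub P term_fams[OF u] by metis
    then show ?thesis using T_to_S0[OF G u] conn_trans by metis
  next
    assume "R ` {a, b, -a, -b} \<subseteq> P"
    then have "Sp a b \<subseteq> P" unfolding Sp_def using S(3) by (rule hull_sub_conv)
    then have "conn terminal_polygon P (Sp a b)"
      using conn_sym conn_sub P term_fams[OF u] by metis
    then show ?thesis using euclid[of terminal_polygon, OF _ u] G conn_trans by metis
  next
    assume U: "R ` {a, b, -a-b-b} \<subseteq> P"
    have cP: "convex P" using S(3) by simp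
    have ne: "R a \<noteq> R (-a-b-b)"
    proof
      assume "R a = R (-a-b-b)"
      then have "a = -a-b-b" by (simp only: R_eq_iff)
      then have h: "fst b = - fst a" "snd b = - snd a" by (auto simp: prod_eq_iff)
      then have "idet a b = 0" by (simp add: idet_def h)
      then show False using u by (simp add: uni_def)
    qed
    have mid: "R (-b) = (1 - 1/2) *\<^sub>R R a + (1/2) *\<^sub>R R (-a-b-b)"
      by (simp add: R_def prod_eq_iff field_simps)
    have "R (-b) \<in> P" unfolding mid using U cP by (intro convexD) auto
    moreover have "-b \<noteq> 0" using u by (auto simp: uni_def idet_def)
    ultimately have "R (-b) extreme_point_of P" using P unfolding terminal_polygon_def
      by (metis (mono_tags, lifting) R_eq_0_iff UnE lattice_R mem_Collect_eq singletonD)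
    moreover have "R (-b) \<in> open_segment (R a) (R (-a-b-b))"
      unfolding in_segment using ne mid by (intro conjI exI[of _ "1/2"]) auto
    ultimately have False using U unfolding extreme_point_of_def by auto
    then show ?thesis ..
  qed
qed

theorem theorem1p3:
  shows "(\<forall>P P'. reflexive_polygon P \<and> reflexive_polygon P' \<longrightarrow>
            (\<exists>(k::nat) (Q::nat \<Rightarrow> (real \<times> real) set).
               Q 0 = P \<and> Q k = P' \<and> (\<forall>i\<le>k. reflexive_polygon (Q i)) \<and>
               (\<forall>i<k. Q i \<subseteq> Q (Suc i) \<or> Q (Suc i) \<subseteq> Q i)))
       \<and> (\<forall>P P'. terminal_polygon P \<and> terminal_polygon P' \<longrightarrow>
            (\<exists>(k::nat) (Q::nat \<Rightarrow> (real \<times> real) set).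
               Q 0 = P \<and> Q k = P' \<and> (\<forall>i\<le>k. terminal_polygon (Q i)) \<and>
               (\<forall>i<k. Q i \<subseteq> Q (Suc i) \<or> Q (Suc i) \<subseteq> Q i)))"
proof (intro conjI allI impI)
  fix P P' assume "reflexive_polygon P \<and> reflexive_polygon P'"
  then have "conn reflexive_polygon P P'"
    using anchor_refl conn_sym conn_trans by metis
  then show "\<exists>(k::nat) (Q::nat \<Rightarrow> (real \<times> real) set).
               Q 0 = P \<and> Q k = P' \<and> (\<forall>i\<le>k. reflexive_polygon (Q i)) \<and>
               (\<forall>i<k. Q i \<subseteq> Q (Suc i) \<or> Q (Suc i) \<subseteq> Q i)" unfolding conn_def .
next
  fix P P' assume "terminal_polygon P \<and> terminal_polygon P'"
  then have "conn terminal_polygon P P'"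
    using anchor_term conn_sym conn_trans by metis
  then show "\<exists>(k::nat) (Q::nat \<Rightarrow> (real \<times> real) set).
               Q 0 = P \<and> Q k = P' \<and> (\<forall>i\<le>k. terminal_polygon (Q i)) \<and>
               (\<forall>i<k. Q i \<subseteq> Q (Suc i) \<or> Q (Suc i) \<subseteq> Q i)" unfolding conn_def .
qed

end
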